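(* Let $\mathrm{SDiv}^+_d(\mathbb G)$ be the closed subscheme of $\mathrm{Div}^+_d(\mathbb G)$ consisting of divisors $D$ with $\lambda^dD=[0]$. Then $\mathcal O_{\mathrm{SDiv}^+_d(\mathbb G)}=\mathcal O_X[[c_2,\dots,c_d]]$, i.e. the restrictions of $c_2,\dots,c_d$ induce an isomorphism $\mathcal O_X[[c_2,\dots,c_d]]\cong\mathcal O_{\mathrm{SDiv}^+_d(\mathbb G)}$.
   Context: $\mathbb G$ is an ordinary formal group over $X=\mathrm{spf}(\mathcal O_X)$ with coordinate $x$, so $\mathcal O_{\mathbb G}=\mathcal O_X[[x]]$, and $x(a+b)=F(x(a),x(b))$ for a formal group law $F$. $\mathrm{Div}^+_d(\mathbb G)=\mathbb G^d/\Sigma_d=\mathrm{spf}(\mathcal O_X[[c_1,\dots,c_d]])$, where $c_k$ is the $k$-th elementary symmetric function in $x_1,\dots,x_d$; the point $\sum_i[a_i]$ has $c_k=\sigma_k(x(a_1),\dots,x(a_d))$. The map $\lambda^d\colon\mathrm{Div}^+_d(\mathbb G)\to\mathrm{Div}^+_1(\mathbb G)=\mathbb G$ sends $\sum_{i=1}^d[a_i]$ to $[a_1+\dots+a_d]$. *)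

theory Defs
  imports "HOL-Library.Poly_Mapping" "HOL-Library.Groups_Big_Fun"
begin

text \<open>Formal power series over a commutative ring in countably many variables
  X 0, X 1, ... : a series is its coefficient function on monomials
  (finitely supported exponent vectors).\<close>

type_synonym mono = "nat \<Rightarrow>\<^sub>0 nat"
type_synonym 'a mps = "mono \<Rightarrow> 'a"

definition mps_const :: "'a::zero \<Rightarrow> 'a mps" where
  "mps_const a = (\<lambda>m. if m = 0 then a else 0)"

definition mps_var :: "nat \<Rightarrow> 'a::{zero,one} mps" where
  "mps_var i = (\<lambda>m. if m = Poly_Mapping.single i 1 then 1 else 0)"

definition mps_diff :: "'a::ab_group_add mps \<Rightarrow> 'a mps \<Rightarrow> 'a mps" where
  "mps_diff f g = (\<lambda>m. f m - g m)"

definition mps_mult :: "'a::comm_ring_1 mps \<Rightarrow> 'a mps \<Rightarrow> 'a mps" where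
  "mps_mult f g = (\<lambda>m. \<Sum>(p, q) \<in> {(p, q). p + q = m}. f p * g q)"

definition mps_pow :: "'a::comm_ring_1 mps \<Rightarrow> nat \<Rightarrow> 'a mps" where
  "mps_pow f n = (mps_mult f ^^ n) (mps_const 1)"

definition mono_subst :: "(nat \<Rightarrow> 'a::comm_ring_1 mps) \<Rightarrow> mono \<Rightarrow> 'a mps" where
  "mono_subst g k = foldr (\<lambda>i acc. mps_mult (mps_pow (g i) (Poly_Mapping.lookup k i)) acc)
                       (sorted_list_of_set (Poly_Mapping.keys k)) (mps_const 1)"

text \<open>Substitution f(g 0, g 1, ...); meaningful when the g i have zero constant
  term and only finitely many g i are nonzero (then every coefficient is a finite sum).\<close>
definition mps_subst :: "'a::comm_ring_1 mps \<Rightarrow> (nat \<Rightarrow> 'a mps) \<Rightarrow> 'a mps" where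
  "mps_subst f g = (\<lambda>m. Sum_any (\<lambda>k. f k * mono_subst g k m))"

definition PS :: "nat set \<Rightarrow> 'a::zero mps set" where
  "PS V = {f. \<forall>m. f m \<noteq> 0 \<longrightarrow> Poly_Mapping.keys m \<subseteq> V}"

definition pair_subst :: "'a::comm_ring_1 mps \<Rightarrow> 'a mps \<Rightarrow> nat \<Rightarrow> 'a mps" where
  "pair_subst a b = (\<lambda>i. if i = 0 then a else if i = 1 then b else mps_const 0)"

text \<open>F(X,Y) with X = X 0, Y = X 1 is a (commutative one-dimensional) formal group law.\<close>
definition formal_group_law :: "'a::comm_ring_1 mps \<Rightarrow> bool" where
  "formal_group_law F \<longleftrightarrow>
     F \<in> PS {0, 1} \<and>
     mps_subst F (pair_subst (mps_var 0) (mps_const 0)) = mps_var 0 \<and>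
     mps_subst F (pair_subst (mps_const 0) (mps_var 1)) = mps_var 1 \<and>
     mps_subst F (pair_subst (mps_var 1) (mps_var 0)) = F \<and>
     mps_subst F (pair_subst (mps_subst F (pair_subst (mps_var 0) (mps_var 1))) (mps_var 2))
       = mps_subst F (pair_subst (mps_var 0) (mps_subst F (pair_subst (mps_var 1) (mps_var 2))))"

text \<open>x(a_1 + ... + a_n) in O[[x_1,...,x_n]], where x_(i+1) is the variable X i.\<close>
primrec iter_sum :: "'a::comm_ring_1 mps \<Rightarrow> nat \<Rightarrow> 'a mps" where
  "iter_sum F 0 = mps_const 0"
| "iter_sum F (Suc n) = mps_subst F (pair_subst (iter_sum F n) (mps_var n))"

definition elem_sym :: "nat \<Rightarrow> nat \<Rightarrow> 'a::{zero,one} mps" where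
  "elem_sym d k = (\<lambda>m. if Poly_Mapping.keys m \<subseteq> {..<d} \<and> card (Poly_Mapping.keys m) = k \<and> (\<forall>i. Poly_Mapping.lookup m i \<le> 1)
                        then 1 else 0)"

text \<open>The map O[[c_1..c_d]] -> O[[x_1..x_d]], c_k (variable k) |-> sigma_k.\<close>
definition sym_subst :: "nat \<Rightarrow> nat \<Rightarrow> 'a::comm_ring_1 mps" where
  "sym_subst d = (\<lambda>k. if 1 \<le> k \<and> k \<le> d then elem_sym d k else mps_const 0)"

definition mps_ideal :: "nat set \<Rightarrow> 'a::comm_ring_1 mps \<Rightarrow> 'a mps set" where
  "mps_ideal V s = {mps_mult s h | h. h \<in> PS V}"

end

theory Submission
  imports Defs
begin


abbreviation lk :: "('b \<Rightarrow>\<^sub>0 'c::zero) \<Rightarrow> 'b \<Rightarrow> 'c" where "lk \<equiv> Poly_Mapping.lookup"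
abbreviation ks :: "('b \<Rightarrow>\<^sub>0 'c::zero) \<Rightarrow> 'b set" where "ks \<equiv> Poly_Mapping.keys"


lemma finite_bounded_monos:
  assumes "finite S"
  shows "finite {p::mono. ks p \<subseteq> S \<and> (\<forall>i. lk p i \<le> (N::nat))}"
proof -
  have "finite {f::nat\<Rightarrow>nat. \<forall>x. (x \<in> S \<longrightarrow> f x \<in> {0..N}) \<and> (x \<notin> S \<longrightarrow> f x = 0)}"
    by (rule finite_set_of_finite_funs) (use assms in auto)
  moreover have "lk ` {p::mono. ks p \<subseteq> S \<and> (\<forall>i. lk p i \<le> N)}
     \<subseteq> {f::nat\<Rightarrow>nat. \<forall>x. (x \<in> S \<longrightarrow> f x \<in> {0..N}) \<and> (x \<notin> S \<longrightarrow> f x = 0)}"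
    by (auto simp: in_keys_iff)
  ultimately have "finite (lk ` {p::mono. ks p \<subseteq> S \<and> (\<forall>i. lk p i \<le> N)})"
    by (rule finite_subset[rotated])
  then show ?thesis
    by (rule finite_imageD) (auto simp: inj_on_def poly_mapping_eqI)
qed

definition Dv :: "mono \<Rightarrow> mono set" where
  "Dv m = {p. \<exists>q. m = p + q}"

lemma finite_Dv: "finite (Dv m)"
proof -
  have "Dv m \<subseteq> {p::mono. ks p \<subseteq> ks m \<and> (\<forall>i. lk p i \<le> Max (lk m ` ks m))}"
  proof (clarsimp simp: Dv_def, intro conjI allI)
    fix q :: mono and p
    show "ks p \<subseteq> ks (p + q)" by (auto simp: in_keys_iff lookup_add)
  next
    fix q p :: mono and i
    show "lk p i \<le> Max (lk (p + q) ` ks (p + q))"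
    proof (cases "i \<in> ks (p+q)")
      case True
      then have "lk (p+q) i \<le> Max (lk (p + q) ` ks (p + q))" by (intro Max_ge) auto
      then show ?thesis by (simp add: lookup_add)
    next
      case False
      then show ?thesis by (simp add: in_keys_iff lookup_add)
    qed
  qed
  then show ?thesis by (rule finite_subset) (rule finite_bounded_monos, simp)
qed

definition Pr :: "mono \<Rightarrow> (mono \<times> mono) set" where
  "Pr m = {(p, q). p + q = m}"

lemma Pr_sub: "Pr m \<subseteq> Dv m \<times> Dv m"
  by (auto simp: Pr_def Dv_def) (metis add.commute)

lemma finite_Pr: "finite (Pr m)"
  using finite_subset[OF Pr_sub] finite_Dv by blast

lemma Dv_trans: "p \<in> Dv m \<Longrightarrow> q \<in> Dv p \<Longrightarrow> q \<in> Dv m"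
  by (auto simp: Dv_def add.assoc)

lemma Dv_self: "m \<in> Dv m"
  by (auto simp: Dv_def intro: exI[of _ 0])

lemma Pr_Dv: "(p, q) \<in> Pr m \<Longrightarrow> p \<in> Dv m \<and> q \<in> Dv m"
  using Pr_sub by blast

lemma mps_mult_Pr: "mps_mult f g m = (\<Sum>(p, q)\<in>Pr m. f p * g q)"
  by (simp add: mps_mult_def Pr_def)

section \<open>Truncation to polynomials\<close>

definition trunc :: "mono \<Rightarrow> 'a::zero mps \<Rightarrow> (mono \<Rightarrow>\<^sub>0 'a)" where
  "trunc m f = Abs_poly_mapping (\<lambda>p. if p \<in> Dv m then f p else 0)"

lemma lookup_trunc: "lk (trunc m f) p = (if p \<in> Dv m then f p else 0)"
proof -
  have "finite {p. (if p \<in> Dv m then f p else 0) \<noteq> 0}"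
    by (rule finite_subset[OF _ finite_Dv[of m]]) auto
  then show ?thesis unfolding trunc_def by simp
qed

lemma lookup_times_Pr:
  fixes A B :: "mono \<Rightarrow>\<^sub>0 'a::comm_ring_1"
  shows "lk (A * B) m = (\<Sum>(p, q)\<in>Pr m. lk A p * lk B q)"
proof -
  have "lk (A * B) m = (\<Sum>(a, b). lk A a * lk B b when m = a + b)"
  proof -
    have "lk (A * B) m = prod_fun (lk A) (lk B) m" by (simp add: lookup_mult prod_fun_def)
    also have "\<dots> = (\<Sum>(a, b). lk A a * lk B b when m = a + b)"
      by (rule prod_fun_unfold_prod) simp_all
    finally show ?thesis .
  qed
  also have "\<dots> = (\<Sum>x\<in>Pr m. (case x of (a, b) \<Rightarrow> lk A a * lk B b when m = a + b))"
    by (rule Sum_any.expand_superset) (auto simp: finite_Pr finite_Pr[unfolded Pr_def] Pr_def when_def split: prod.splits if_splits)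
  also have "\<dots> = (\<Sum>(p, q)\<in>Pr m. lk A p * lk B q)"
    by (rule sum.cong) (auto simp: Pr_def)
  finally show ?thesis .
qed

lemma mps_mult_trunc:
  assumes "m' \<in> Dv m"
  shows "mps_mult f g m' = lk (trunc m f * trunc m g) m'"
  unfolding mps_mult_Pr lookup_times_Pr
  by (rule sum.cong) (auto simp: lookup_trunc dest!: Pr_Dv intro: Dv_trans[OF assms])


typedef 'a ps = "UNIV :: (mono \<Rightarrow> 'a) set" morphisms cf PSA by simp

setup_lifting type_definition_ps

lemma ps_eqI: "(\<And>m. cf a m = cf b m) \<Longrightarrow> a = b"
  by (metis cf_inverse ext)

lemma cf_PSA [simp]: "cf (PSA f) = f"
  by (simp add: PSA_inverse)

instantiation ps :: (comm_ring_1) comm_ring_1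
begin
lift_definition zero_ps :: "'a ps" is "mps_const 0" .
lift_definition one_ps :: "'a ps" is "mps_const 1" .
lift_definition plus_ps :: "'a ps \<Rightarrow> 'a ps \<Rightarrow> 'a ps" is "\<lambda>f g m. f m + g m" .
lift_definition minus_ps :: "'a ps \<Rightarrow> 'a ps \<Rightarrow> 'a ps" is "mps_diff" .
lift_definition uminus_ps :: "'a ps \<Rightarrow> 'a ps" is "\<lambda>f m. - f m" .
lift_definition times_ps :: "'a ps \<Rightarrow> 'a ps \<Rightarrow> 'a ps" is "mps_mult" .

lemma cf_mult_tr: "m' \<in> Dv m \<Longrightarrow> cf (a * b) m' = lk (trunc m (cf a) * trunc m (cf b)) m'"
  by (simp add: times_ps.rep_eq mps_mult_trunc)

lemma trunc_one: "trunc m (mps_const (1::'a)) = 1"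
  by (rule poly_mapping_eqI) (auto simp: lookup_trunc lookup_one mps_const_def when_def Dv_def)

instance
proof
  fix a b c :: "'a ps"
  show "a * b * c = a * (b * c)"
  proof (rule ps_eqI)
    fix m
    have "cf (a * b * c) m = (\<Sum>(p, q)\<in>Pr m. cf (a * b) p * cf c q)"
      by (simp add: times_ps.rep_eq mps_mult_Pr)
    also have "\<dots> = (\<Sum>(p, q)\<in>Pr m. lk (trunc m (cf a) * trunc m (cf b)) p * lk (trunc m (cf c)) q)"
      by (rule sum.cong) (auto simp: cf_mult_tr lookup_trunc dest!: Pr_Dv)
    also have "\<dots> = lk (trunc m (cf a) * trunc m (cf b) * trunc m (cf c)) m"
      by (simp add: lookup_times_Pr)
    also have "\<dots> = lk (trunc m (cf a) * (trunc m (cf b) * trunc m (cf c))) m"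
      by (simp add: mult.assoc)
    also have "\<dots> = (\<Sum>(p, q)\<in>Pr m. lk (trunc m (cf a)) p * lk (trunc m (cf b) * trunc m (cf c)) q)"
      by (simp add: lookup_times_Pr)
    also have "\<dots> = (\<Sum>(p, q)\<in>Pr m. cf a p * cf (b * c) q)"
      by (rule sum.cong) (auto simp: cf_mult_tr lookup_trunc dest!: Pr_Dv)
    also have "\<dots> = cf (a * (b * c)) m"
      by (simp add: times_ps.rep_eq mps_mult_Pr)
    finally show "cf (a * b * c) m = cf (a * (b * c)) m" .
  qed
  show "a * b = b * a"
  proof (rule ps_eqI)
    fix m
    show "cf (a * b) m = cf (b * a) m"
      using cf_mult_tr[OF Dv_self, of a b m] cf_mult_tr[OF Dv_self, of b a m]
      by (simp add: mult.commute)
  qed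
  show "1 * a = a"
  proof (rule ps_eqI)
    fix m
    show "cf (1 * a) m = cf a m"
      using cf_mult_tr[OF Dv_self, of 1 a m]
      by (simp add: one_ps.rep_eq trunc_one lookup_trunc Dv_self)
  qed
  show "(a + b) * c = a * c + b * c"
    by (rule ps_eqI) (simp add: times_ps.rep_eq plus_ps.rep_eq mps_mult_Pr sum.distrib[symmetric]
        distrib_right split_def)
  show "0 + a = a"
    by (rule ps_eqI) (simp add: plus_ps.rep_eq zero_ps.rep_eq mps_const_def)
  show "a + b = b + a"
    by (rule ps_eqI) (simp add: plus_ps.rep_eq add.commute)
  show "a + b + c = a + (b + c)"
    by (rule ps_eqI) (simp add: plus_ps.rep_eq add.assoc)
  show "- a + a = 0"
    by (rule ps_eqI) (simp add: plus_ps.rep_eq uminus_ps.rep_eq zero_ps.rep_eq mps_const_def)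
  show "a - b = a + - b"
    by (rule ps_eqI) (simp add: plus_ps.rep_eq uminus_ps.rep_eq minus_ps.rep_eq mps_diff_def)
  show "(0::'a ps) \<noteq> 1"
  proof
    assume "(0::'a ps) = 1"
    then have "cf (0::'a ps) 0 = cf 1 0" by simp
    then show False by (simp add: zero_ps.rep_eq one_ps.rep_eq mps_const_def)
  qed
qed
end

lemma cf_add [simp]: "cf (a + b) m = cf a m + cf b m"
  by (simp add: plus_ps.rep_eq)
lemma cf_diff [simp]: "cf (a - b) m = cf a m - cf b m"
  by (simp add: minus_ps.rep_eq mps_diff_def)
lemma cf_uminus [simp]: "cf (- a) m = - cf a m"
  by (simp add: uminus_ps.rep_eq)
lemma cf_zero [simp]: "cf 0 m = 0"
  by (simp add: zero_ps.rep_eq mps_const_def)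
lemma cf_one: "cf 1 m = (if m = 0 then 1 else 0)"
  by (simp add: one_ps.rep_eq mps_const_def)
lemma cf_mult: "cf (a * b) m = (\<Sum>(p, q)\<in>Pr m. cf a p * cf b q)"
  by (simp add: times_ps.rep_eq mps_mult_Pr)
lemma cf_sum: "cf (sum f A) m = (\<Sum>x\<in>A. cf (f x) m)"
  by (induction A rule: infinite_finite_induct) auto

lemma cf_mult_eq: "cf (a * b) = mps_mult (cf a) (cf b)"
  by (simp add: times_ps.rep_eq)
lemma cf_one_eq: "cf 1 = mps_const 1"
  by (simp add: one_ps.rep_eq)
lemma cf_zero_eq: "cf 0 = mps_const 0"
  by (simp add: zero_ps.rep_eq)

lemma cf_power_eq: "cf (a ^ n) = mps_pow (cf a) n"
  by (induction n) (simp_all add: mps_pow_def cf_one_eq cf_mult_eq)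


definition wsum :: "(nat \<Rightarrow> nat) \<Rightarrow> mono \<Rightarrow> nat" where
  "wsum w m = (\<Sum>i\<in>ks m. w i * lk m i)"

lemma wsum_superset: "finite S \<Longrightarrow> ks m \<subseteq> S \<Longrightarrow> wsum w m = (\<Sum>i\<in>S. w i * lk m i)"
  unfolding wsum_def by (rule sum.mono_neutral_left) (auto simp: in_keys_iff)

lemma ks_add: "ks (p + q :: mono) = ks p \<union> ks q"
  by (auto simp: in_keys_iff lookup_add)

lemma wsum_add: "wsum w (p + q) = wsum w p + wsum w q"
proof -
  have "wsum w (p + q) = (\<Sum>i\<in>ks p \<union> ks q. w i * lk (p + q) i)"
    by (rule wsum_superset) (auto simp: ks_add)
  also have "\<dots> = (\<Sum>i\<in>ks p \<union> ks q. w i * lk p i) + (\<Sum>i\<in>ks p \<union> ks q. w i * lk q i)"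
    by (simp add: lookup_add algebra_simps sum.distrib)
  also have "\<dots> = wsum w p + wsum w q"
    by (simp add: wsum_superset[of "ks p \<union> ks q" p] wsum_superset[of "ks p \<union> ks q" q])
  finally show ?thesis .
qed

lemma wsum_zero [simp]: "wsum w 0 = 0"
  by (simp add: wsum_def)

lemma wsum_single [simp]: "wsum w (Poly_Mapping.single i n) = w i * n"
  by (cases "n = 0") (simp_all add: wsum_def)

abbreviation mdeg :: "mono \<Rightarrow> nat" where "mdeg \<equiv> wsum (\<lambda>_. 1)"

lemma mdeg_eq_0 [simp]: "mdeg m = 0 \<longleftrightarrow> m = 0"
proof
  assume "mdeg m = 0"
  then have "\<forall>i\<in>ks m. lk m i = 0" by (simp add: wsum_def)
  then show "m = 0" by (metis in_keys_iff keys_eq_empty equals0I)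
qed simp

lemma mdeg_eq_0' [simp]: "wsum (\<lambda>_. Suc 0) m = 0 \<longleftrightarrow> m = 0"
  using mdeg_eq_0[of m] by simp

lemma lk_le_mdeg: "lk m i \<le> mdeg m"
proof (cases "i \<in> ks m")
  case True
  then show ?thesis unfolding wsum_def by (simp add: member_le_sum)
qed (simp add: in_keys_iff)

lemma Pr_mdeg: "(p, q) \<in> Pr m \<Longrightarrow> mdeg p \<le> mdeg m \<and> mdeg q \<le> mdeg m"
  by (auto simp: Pr_def wsum_add)

lemma Pr_ks: "(p, q) \<in> Pr m \<Longrightarrow> ks p \<subseteq> ks m \<and> ks q \<subseteq> ks m"
  by (auto simp: Pr_def ks_add)

definition KS :: "nat set \<Rightarrow> nat \<Rightarrow> mono set" where
  "KS S N = {k. ks k \<subseteq> S \<and> mdeg k \<le> N}"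

lemma finite_KS: "finite S \<Longrightarrow> finite (KS S N)"
  by (rule finite_subset[OF _ finite_bounded_monos[of S N]])
     (auto simp: KS_def intro: order.trans[OF lk_le_mdeg])

lemma KS_0: "KS S 0 = {0}"
  by (auto simp: KS_def)

definition cst :: "'a::comm_ring_1 \<Rightarrow> 'a ps" where "cst c = PSA (mps_const c)"
definition mon :: "mono \<Rightarrow> 'a::comm_ring_1 ps" where "mon k = PSA (\<lambda>m. if m = k then 1 else 0)"
definition X :: "nat \<Rightarrow> 'a::comm_ring_1 ps" where "X i = mon (Poly_Mapping.single i 1)"

lemma cf_cst: "cf (cst c) m = (if m = 0 then c else 0)"
  by (simp add: cst_def mps_const_def)
lemma cf_mon: "cf (mon k) m = (if m = k then 1 else 0)"
  by (simp add: mon_def)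

lemma finite_Pr' [simp]: "finite {(p, q). p + q = (m::mono)}"
  using finite_Pr[of m] by (simp add: Pr_def)

lemma Pr_0_left: "(0, m) \<in> Pr m" by (simp add: Pr_def)

lemma sum_Pr_left:
  assumes "\<And>p q. (p, q) \<in> Pr m \<Longrightarrow> p \<noteq> k \<Longrightarrow> g p q = 0"
  shows "(\<Sum>(p, q)\<in>Pr m. g p q) = (if k \<in> Dv m then g k (m - k) else 0)"
proof (cases "k \<in> Dv m")
  case True
  then obtain r where r: "m = k + r" by (auto simp: Dv_def)
  have "(\<Sum>(p, q)\<in>Pr m. g p q) = (\<Sum>x\<in>{(k, r)}. case x of (p, q) \<Rightarrow> g p q)"
    by (rule sum.mono_neutral_right) (auto simp: finite_Pr Pr_def r intro: assms)
  then show ?thesis using True r by simp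
next
  case False
  then show ?thesis using assms
    by (auto intro!: sum.neutral simp: Pr_def Dv_def)
qed

lemma cf_mon_mult: "cf (mon k * a) m = (if k \<in> Dv m then cf a (m - k) else 0)"
  unfolding cf_mult
  by (subst sum_Pr_left[of m k]) (auto simp: cf_mon)

lemma cf_cst_mult: "cf (cst c * a) m = c * cf a m"
  unfolding cf_mult
  by (subst sum_Pr_left[of m 0]) (auto simp: cf_cst Dv_def)

lemma cst_0 [simp]: "cst 0 = 0" by (rule ps_eqI) (simp add: cf_cst)
lemma cst_1 [simp]: "cst 1 = 1" by (rule ps_eqI) (simp add: cf_cst cf_one)
lemma mon_0 [simp]: "mon 0 = 1" by (rule ps_eqI) (simp add: cf_mon cf_one)
lemma cst_mult: "cst (a * b) = cst a * cst b"
  by (rule ps_eqI) (simp add: cf_cst_mult cf_cst)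
lemma cst_add: "cst (a + b) = cst a + cst b"
  by (rule ps_eqI) (simp add: cf_cst)

lemma mon_mult: "mon p * mon q = mon (p + q)"
proof (rule ps_eqI)
  fix m
  show "cf (mon p * mon q) m = cf (mon (p + q)) m"
    by (auto simp: cf_mon_mult cf_mon Dv_def)
qed

definition ord_ge :: "'a::comm_ring_1 ps \<Rightarrow> nat \<Rightarrow> bool" where
  "ord_ge a n \<longleftrightarrow> (\<forall>m. mdeg m < n \<longrightarrow> cf a m = 0)"

lemma ord_ge_mult: "ord_ge a A \<Longrightarrow> ord_ge b B \<Longrightarrow> ord_ge (a * b) (A + B)"
  unfolding ord_ge_def cf_mult
proof (intro allI impI sum.neutral ballI, clarify)
  fix m p q
  assume a: "\<forall>m. mdeg m < A \<longrightarrow> cf a m = 0" and b: "\<forall>m. mdeg m < B \<longrightarrow> cf b m = 0"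
    and "mdeg m < A + B" and "(p, q) \<in> Pr m"
  then have "mdeg p < A \<or> mdeg q < B" by (auto simp: Pr_def wsum_add)
  then show "cf a p * cf b q = 0" using a b by auto
qed

lemma ord_ge_0: "ord_ge a 0" by (simp add: ord_ge_def)

lemma ord_ge_power: "ord_ge a A \<Longrightarrow> ord_ge (a ^ n) (n * A)"
  by (induction n) (simp_all add: ord_ge_0 ord_ge_mult)

lemma ord_ge_prod: "(\<And>i. i \<in> I \<Longrightarrow> ord_ge (g i) (oo i)) \<Longrightarrow> ord_ge (\<Prod>i\<in>I. g i) (\<Sum>i\<in>I. oo i)"
  by (induction I rule: infinite_finite_induct) (simp_all add: ord_ge_0 ord_ge_mult)

section \<open>Substitution\<close>

definition nice :: "(nat \<Rightarrow> 'a::comm_ring_1 ps) \<Rightarrow> bool" where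
  "nice h \<longleftrightarrow> (\<forall>i. cf (h i) 0 = 0) \<and> finite {i. h i \<noteq> 0}"

definition hpow :: "(nat \<Rightarrow> 'a::comm_ring_1 ps) \<Rightarrow> mono \<Rightarrow> 'a ps" where
  "hpow h k = (\<Prod>i\<in>ks k. h i ^ lk k i)"

definition sub :: "'a::comm_ring_1 ps \<Rightarrow> (nat \<Rightarrow> 'a ps) \<Rightarrow> 'a ps" where
  "sub f h = PSA (mps_subst (cf f) (\<lambda>i. cf (h i)))"

lemma foldr_mono_subst:
  "distinct xs \<Longrightarrow> foldr (\<lambda>i acc. mps_mult (mps_pow (cf (h i)) (lk k i)) acc) xs (mps_const 1)
     = cf (\<Prod>i\<in>set xs. h i ^ lk k i)"
  by (induction xs) (simp_all add: cf_one_eq cf_mult_eq cf_power_eq)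

lemma mono_subst_hpow: "mono_subst (\<lambda>i. cf (h i)) k = cf (hpow h k)"
  unfolding mono_subst_def hpow_def
  by (subst foldr_mono_subst) simp_all

lemma ord_ge_hpow: assumes "nice h" shows "ord_ge (hpow h k) (mdeg k)"
proof -
  have "ord_ge (h i) 1" for i
    using assms by (auto simp: ord_ge_def nice_def)
  then have "ord_ge (\<Prod>i\<in>ks k. h i ^ lk k i) (\<Sum>i\<in>ks k. lk k i * 1)"
    by (intro ord_ge_prod ord_ge_power)
  then show ?thesis by (simp add: hpow_def wsum_def mult.commute)
qed

lemma hpow_zero_outside: assumes "i \<in> ks k" "h i = 0" shows "hpow h k = 0"
proof -
  have "h i ^ lk k i = 0" using assms by (simp add: in_keys_iff zero_power)
  then show ?thesis unfolding hpow_def using assms(1) by (metis finite_keys prod_zero)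
qed

lemma hpow_0 [simp]: "hpow h 0 = 1" by (simp add: hpow_def)

lemma hpow_add: "hpow h (p + q) = hpow h p * hpow h q"
proof -
  have fin: "finite (ks p \<union> ks q)" by simp
  have e: "hpow h r = (\<Prod>i\<in>ks p \<union> ks q. h i ^ lk r i)" if "ks r \<subseteq> ks p \<union> ks q" for r
    unfolding hpow_def using that by (intro prod.mono_neutral_left) (auto simp: in_keys_iff)
  show ?thesis
    by (simp add: e ks_add lookup_add power_add prod.distrib)
qed

lemma hpow_single: "hpow h (Poly_Mapping.single i 1) = h i"
  by (simp add: hpow_def)

lemma sub_fin:
  assumes h: "nice h" and S: "finite S" "{i. h i \<noteq> 0} \<subseteq> S" and N: "mdeg m \<le> N"
  shows "cf (sub f h) m = (\<Sum>k\<in>KS S N. cf f k * cf (hpow h k) m)"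
proof -
  have "cf (sub f h) m = Sum_any (\<lambda>k. cf f k * cf (hpow h k) m)"
    by (simp add: sub_def mps_subst_def mono_subst_hpow)
  also have "\<dots> = (\<Sum>k\<in>KS S N. cf f k * cf (hpow h k) m)"
  proof (rule Sum_any.expand_superset[OF finite_KS[OF S(1)]], clarify)
    fix k assume nz: "cf f k * cf (hpow h k) m \<noteq> 0"
    show "k \<in> KS S N"
    proof (rule ccontr)
      assume "k \<notin> KS S N"
      then consider i where "i \<in> ks k" "i \<notin> S" | "mdeg k > N" by (auto simp: KS_def)
      then show False
      proof cases
        case 1
        then have "h i = 0" using S by auto
        with 1 nz show False by (simp add: hpow_zero_outside)
      next
        case 2
        then show False using nz ord_ge_hpow[OF h, of k] N by (auto simp: ord_ge_def)
      qed
    qed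
  qed
  finally show ?thesis .
qed

lemma nice_finite: "nice h \<Longrightarrow> finite {i. h i \<noteq> 0}" by (simp add: nice_def)

lemma sub_fin':
  "nice h \<Longrightarrow> mdeg m \<le> N \<Longrightarrow> cf (sub f h) m = (\<Sum>k\<in>KS {i. h i \<noteq> 0} N. cf f k * cf (hpow h k) m)"
  by (rule sub_fin) (auto simp: nice_def)

lemma sub_add: "nice h \<Longrightarrow> sub (a + b) h = sub a h + sub b h"
  by (rule ps_eqI) (simp add: sub_fin'[OF _ order_refl] distrib_right sum.distrib)

lemma sub_zero [simp]: "nice h \<Longrightarrow> sub 0 h = 0"
  by (rule ps_eqI) (simp add: sub_fin'[OF _ order_refl])

lemma sub_uminus: "nice h \<Longrightarrow> sub (- a) h = - sub a h"
  by (rule ps_eqI) (simp add: sub_fin'[OF _ order_refl] sum_negf)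

lemma sub_diff: "nice h \<Longrightarrow> sub (a - b) h = sub a h - sub b h"
  by (metis diff_conv_add_uminus sub_add sub_uminus)

lemma sub_sum: "nice h \<Longrightarrow> sub (\<Sum>x\<in>A. g x) h = (\<Sum>x\<in>A. sub (g x) h)"
  by (induction A rule: infinite_finite_induct) (simp_all add: sub_add)

lemma sub_cst_mult: "nice h \<Longrightarrow> sub (cst c * a) h = cst c * sub a h"
  by (rule ps_eqI) (simp add: sub_fin'[OF _ order_refl] cf_cst_mult sum_distrib_left mult.assoc)

lemma sub_mon: assumes "nice h" shows "sub (mon k) h = hpow h k"
proof (rule ps_eqI)
  fix m
  let ?K = "KS {i. h i \<noteq> 0} (mdeg m)"
  have "cf (sub (mon k) h) m = (\<Sum>k'\<in>?K. (if k' = k then 1 else 0) * cf (hpow h k') m)"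
    using sub_fin'[OF assms order_refl] by (simp add: cf_mon)
  also have "\<dots> = (if k \<in> ?K then cf (hpow h k) m else 0)"
    by (simp add: if_distrib[of "\<lambda>x. x * _"] sum.delta[OF finite_KS[OF nice_finite[OF assms]]] cong: if_cong)
  also have "\<dots> = cf (hpow h k) m"
  proof -
    have "cf (hpow h k) m = 0" if "k \<notin> ?K"
    proof -
      from that consider i where "i \<in> ks k" "h i = 0" | "mdeg k > mdeg m" by (auto simp: KS_def)
      then show ?thesis
      proof cases
        case 1 then show ?thesis by (simp add: hpow_zero_outside)
      next
        case 2 then show ?thesis using ord_ge_hpow[OF assms, of k] by (auto simp: ord_ge_def)
      qed
    qed
    then show ?thesis by auto
  qed
  finally show "cf (sub (mon k) h) m = cf (hpow h k) m" .
qed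

lemma sub_one [simp]: "nice h \<Longrightarrow> sub 1 h = 1"
  using sub_mon[of h 0] by simp

lemma sub_X [simp]: "nice h \<Longrightarrow> sub (X i) h = h i"
  unfolding X_def by (simp only: sub_mon hpow_single)

lemma sub_cst [simp]: "nice h \<Longrightarrow> sub (cst c) h = cst c"
  using sub_cst_mult[of h c 1] by simp


definition truncS :: "nat set \<Rightarrow> nat \<Rightarrow> 'a::comm_ring_1 ps \<Rightarrow> 'a ps" where
  "truncS S N a = (\<Sum>k\<in>KS S N. cst (cf a k) * mon k)"

lemma cf_truncS: "finite S \<Longrightarrow> cf (truncS S N a) m = (if m \<in> KS S N then cf a m else 0)"
  unfolding truncS_def cf_sum
  by (simp add: cf_cst_mult cf_mon finite_KS if_distrib[of "\<lambda>x. _ * x"] cong: if_cong)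

definition agree :: "nat \<Rightarrow> 'a::comm_ring_1 ps \<Rightarrow> 'a ps \<Rightarrow> bool" where
  "agree N x y \<longleftrightarrow> (\<forall>m. mdeg m \<le> N \<longrightarrow> cf x m = cf y m)"

lemma agree_sub_KS:
  assumes h: "nice h" and S: "finite S" "{i. h i \<noteq> 0} \<subseteq> S" and eq: "\<And>k. k \<in> KS S N \<Longrightarrow> cf x k = cf y k"
  shows "agree N (sub x h) (sub y h)"
  unfolding agree_def by (auto simp: sub_fin[OF h S] eq)

lemma agree_sub_trunc:
  assumes h: "nice h" and S: "finite S" "{i. h i \<noteq> 0} \<subseteq> S"
  shows "agree N (sub a h) (sub (truncS S N a) h)"
  by (rule agree_sub_KS[OF h S]) (simp add: cf_truncS S)

lemma agree_mult: "agree N x x' \<Longrightarrow> agree N y y' \<Longrightarrow> agree N (x * y) (x' * y')"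
  unfolding agree_def cf_mult
proof (intro allI impI sum.cong refl, clarify)
  fix m p q assume a: "\<forall>m. mdeg m \<le> N \<longrightarrow> cf x m = cf x' m" "\<forall>m. mdeg m \<le> N \<longrightarrow> cf y m = cf y' m"
    and "mdeg m \<le> N" "(p, q) \<in> Pr m"
  then have "mdeg p \<le> N" "mdeg q \<le> N" using Pr_mdeg by force+
  then show "cf x p * cf y q = cf x' p * cf y' q" using a by simp
qed

lemma agree_trans: "agree N x y \<Longrightarrow> agree N y z \<Longrightarrow> agree N x z"
  by (simp add: agree_def)

lemma agree_sym: "agree N x y \<Longrightarrow> agree N y x"
  by (simp add: agree_def)

lemma agree_all: "(\<And>N. agree N x y) \<Longrightarrow> x = y"
  by (rule ps_eqI) (auto simp: agree_def)

lemma sub_truncS: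
  "nice h \<Longrightarrow> sub (truncS S N a) h = (\<Sum>k\<in>KS S N. cst (cf a k) * hpow h k)"
  by (simp add: truncS_def sub_sum sub_cst_mult sub_mon)

lemma truncS_mult_eq:
  assumes S: "finite S" and k: "k \<in> KS S N"
  shows "cf (a * b) k = cf (truncS S N a * truncS S N b) k"
  unfolding cf_mult
proof (rule sum.cong[OF refl], clarify)
  fix p q assume "(p, q) \<in> Pr k"
  then have "p \<in> KS S N" "q \<in> KS S N" using k Pr_mdeg[of p q k] Pr_ks[of p q k]
    by (auto simp: KS_def)
  then show "cf a p * cf b q = cf (truncS S N a) p * cf (truncS S N b) q"
    by (simp add: cf_truncS S)
qed

lemma sub_truncS_mult:
  assumes h: "nice h" and S: "finite S"
  shows "sub (truncS S N a * truncS S N b) h = sub (truncS S N a) h * sub (truncS S N b) h"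
proof -
  have "truncS S N a * truncS S N b = (\<Sum>p\<in>KS S N. \<Sum>q\<in>KS S N. cst (cf a p * cf b q) * mon (p + q))"
    unfolding truncS_def sum_product
    by (intro sum.cong refl) (simp add: cst_mult mon_mult[symmetric] algebra_simps)
  then have "sub (truncS S N a * truncS S N b) h
      = (\<Sum>p\<in>KS S N. \<Sum>q\<in>KS S N. cst (cf a p * cf b q) * hpow h (p + q))"
    by (simp add: sub_sum sub_cst_mult sub_mon h)
  also have "\<dots> = (\<Sum>k\<in>KS S N. cst (cf a k) * hpow h k) * (\<Sum>k\<in>KS S N. cst (cf b k) * hpow h k)"
    unfolding sum_product
    by (intro sum.cong refl) (simp add: cst_mult hpow_add algebra_simps)
  finally show ?thesis by (simp add: sub_truncS h)
qed

lemma sub_mult: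
  assumes h: "nice h"
  shows "sub (a * b) h = sub a h * sub b h"
proof (rule agree_all)
  fix N
  let ?S = "{i. h i \<noteq> 0}"
  have S: "finite ?S" "?S \<subseteq> ?S" using h by (auto simp: nice_def)
  have "agree N (sub (a * b) h) (sub (truncS ?S N a * truncS ?S N b) h)"
    by (rule agree_sub_KS[OF h S]) (rule truncS_mult_eq[OF S(1)])
  also have "sub (truncS ?S N a * truncS ?S N b) h = sub (truncS ?S N a) h * sub (truncS ?S N b) h"
    by (rule sub_truncS_mult[OF h S(1)])
  finally have 1: "agree N (sub (a * b) h) (sub (truncS ?S N a) h * sub (truncS ?S N b) h)" .
  have 2: "agree N (sub (truncS ?S N a) h * sub (truncS ?S N b) h) (sub a h * sub b h)"
    using agree_mult[OF agree_sym[OF agree_sub_trunc[OF h S, of N a]] agree_sym[OF agree_sub_trunc[OF h S, of N b]]] .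
  show "agree N (sub (a * b) h) (sub a h * sub b h)"
    using agree_trans[OF 1 2] .
qed

lemma sub_power: "nice h \<Longrightarrow> sub (a ^ n) h = sub a h ^ n"
  by (induction n) (simp_all add: sub_mult)

lemma sub_prod: "nice h \<Longrightarrow> sub (\<Prod>x\<in>A. g x) h = (\<Prod>x\<in>A. sub (g x) h)"
  by (induction A rule: infinite_finite_induct) (simp_all add: sub_mult)

lemma sub_hpow: "nice h \<Longrightarrow> sub (hpow g k) h = hpow (\<lambda>i. sub (g i) h) k"
  by (simp add: hpow_def sub_prod sub_power)

lemma sub_cf0: assumes h: "nice h" shows "cf (sub x h) 0 = cf x 0"
proof -
  have "cf (sub x h) 0 = (\<Sum>k\<in>KS {i. h i \<noteq> 0} 0. cf x k * cf (hpow h k) 0)"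
    by (rule sub_fin'[OF h]) simp
  then show ?thesis by (simp add: KS_0 cf_one)
qed

lemma nice_comp: assumes g: "nice g" and h: "nice h" shows "nice (\<lambda>i. sub (g i) h)"
proof -
  have "{i. sub (g i) h \<noteq> 0} \<subseteq> {i. g i \<noteq> 0}" using h by auto
  then show ?thesis using g h by (auto simp: nice_def sub_cf0 intro: finite_subset)
qed

lemma sub_assoc:
  assumes g: "nice g" and h: "nice h"
  shows "sub (sub f g) h = sub f (\<lambda>i. sub (g i) h)"
proof (rule agree_all)
  fix N
  let ?Sg = "{i. g i \<noteq> 0}" and ?Sh = "{i. h i \<noteq> 0}"
  let ?gh = "\<lambda>i. sub (g i) h"
  have Sg: "finite ?Sg" "?Sg \<subseteq> ?Sg" using g by (auto simp: nice_def)
  have Sh: "finite ?Sh" "?Sh \<subseteq> ?Sh" using h by (auto simp: nice_def)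
  have gh: "nice ?gh" by (rule nice_comp[OF g h])
  have Sgh: "{i. ?gh i \<noteq> 0} \<subseteq> ?Sg" using h by auto
  let ?P = "truncS ?Sg N f"
  have 1: "agree N (sub f g) (sub ?P g)" by (rule agree_sub_trunc[OF g Sg])
  have 2: "agree N (sub (sub f g) h) (sub (sub ?P g) h)"
    by (rule agree_sub_KS[OF h Sh]) (use 1 in \<open>auto simp: agree_def KS_def\<close>)
  have 3: "sub (sub ?P g) h = sub ?P ?gh"
    by (simp add: sub_truncS g gh sub_sum sub_cst_mult h sub_hpow)
  have 4: "agree N (sub ?P ?gh) (sub f ?gh)"
    by (rule agree_sym, rule agree_sub_trunc[OF gh Sg(1) Sgh])
  show "agree N (sub (sub f g) h) (sub f ?gh)"
    using agree_trans[OF 2[unfolded 3] 4] .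
qed


section \<open>Coefficient operators commuting with substitution\<close>

definition cop :: "(mono \<Rightarrow> bool) \<Rightarrow> (mono \<Rightarrow> mono) \<Rightarrow> 'a::comm_ring_1 ps \<Rightarrow> 'a ps" where
  "cop P \<pi> x = PSA (\<lambda>m. if P m then cf x (\<pi> m) else 0)"

lemma cf_cop: "cf (cop P \<pi> x) m = (if P m then cf x (\<pi> m) else 0)"
  by (simp add: cop_def)

lemma cop_zero [simp]: "cop P \<pi> 0 = 0"
  by (rule ps_eqI) (simp add: cf_cop)

lemma cop_add: "cop P \<pi> (x + y) = cop P \<pi> x + cop P \<pi> y"
  by (rule ps_eqI) (simp add: cf_cop)

lemma cop_diff: "cop P \<pi> (x - y) = cop P \<pi> x - cop P \<pi> y"
  by (rule ps_eqI) (simp add: cf_cop)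

lemma cop_hpow:
  assumes mult: "\<And>x y :: 'a::comm_ring_1 ps. cop P \<pi> (x * y) = cop P \<pi> x * cop P \<pi> y"
    and one: "cop P \<pi> (1 :: 'a ps) = 1"
  shows "cop P \<pi> (hpow (h :: nat \<Rightarrow> 'a ps) k) = hpow (\<lambda>i. cop P \<pi> (h i)) k"
proof -
  have pow: "cop P \<pi> ((x :: 'a ps) ^ n) = cop P \<pi> x ^ n" for x n
    by (induction n) (simp_all add: mult one)
  have prod: "cop P \<pi> (\<Prod>i\<in>A. (g i :: 'a ps)) = (\<Prod>i\<in>A. cop P \<pi> (g i))" for A g
    by (induction A rule: infinite_finite_induct) (simp_all add: mult one)
  show ?thesis by (simp add: hpow_def prod pow)
qed

lemma cop_nice:
  assumes deg: "\<And>m. mdeg (\<pi> m) \<le> mdeg m" and h: "nice h"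
  shows "nice (\<lambda>i. cop P \<pi> (h i))"
proof -
  have pi0: "\<pi> 0 = 0" using deg[of 0] by simp
  have "{i. cop P \<pi> (h i) \<noteq> 0} \<subseteq> {i. h i \<noteq> 0}" by auto
  then show ?thesis using h by (auto simp: nice_def cf_cop pi0 intro: finite_subset)
qed

lemma cop_sub:
  assumes mult: "\<And>x y :: 'a::comm_ring_1 ps. cop P \<pi> (x * y) = cop P \<pi> x * cop P \<pi> y"
    and one: "cop P \<pi> (1 :: 'a ps) = 1"
    and deg: "\<And>m. mdeg (\<pi> m) \<le> mdeg m" and h: "nice (h :: nat \<Rightarrow> 'a ps)"
  shows "cop P \<pi> (sub f h) = sub f (\<lambda>i. cop P \<pi> (h i))"
proof (rule ps_eqI)
  fix m
  let ?S = "{i. h i \<noteq> 0}"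
  have S: "finite ?S" using h by (simp add: nice_def)
  have S2: "{i. cop P \<pi> (h i) \<noteq> 0} \<subseteq> ?S" by auto
  have "cf (cop P \<pi> (sub f h)) m = (if P m then (\<Sum>k\<in>KS ?S (mdeg m). cf f k * cf (hpow h k) (\<pi> m)) else 0)"
    by (simp add: cf_cop sub_fin[OF h S order_refl deg])
  also have "\<dots> = (\<Sum>k\<in>KS ?S (mdeg m). cf f k * cf (cop P \<pi> (hpow h k)) m)"
    by (simp add: cf_cop)
  also have "\<dots> = cf (sub f (\<lambda>i. cop P \<pi> (h i))) m"
    by (simp add: sub_fin[OF cop_nice[OF deg h] S S2 order_refl] cop_hpow[OF mult one])
  finally show "cf (cop P \<pi> (sub f h)) m = cf (sub f (\<lambda>i. cop P \<pi> (h i))) m" .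
qed

definition tr :: "nat \<Rightarrow> nat \<Rightarrow> nat \<Rightarrow> nat" where
  "tr i j x = (if x = i then j else if x = j then i else x)"

lemma tr_tr [simp]: "tr i j (tr i j x) = x"
  by (simp add: tr_def)

lemma bij_tr: "bij (tr i j)"
  by (metis bij_betw_imageI inj_on_inverseI surj_def tr_tr)

definition mperm :: "nat \<Rightarrow> nat \<Rightarrow> mono \<Rightarrow> mono" where
  "mperm i j m = Abs_poly_mapping (\<lambda>x. lk m (tr i j x))"

lemma lk_mperm [simp]: "lk (mperm i j m) x = lk m (tr i j x)"
proof -
  have "{x. lk m (tr i j x) \<noteq> 0} = tr i j ` ks m"
  proof (intro set_eqI iffI)
    fix x assume "x \<in> {x. lk m (tr i j x) \<noteq> 0}"
    then show "x \<in> tr i j ` ks m" by (intro image_eqI[of _ _ "tr i j x"]) (simp_all add: in_keys_iff)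
  next
    fix x assume "x \<in> tr i j ` ks m" then show "x \<in> {x. lk m (tr i j x) \<noteq> 0}" by (auto simp: in_keys_iff)
  qed
  then have "finite {x. lk m (tr i j x) \<noteq> 0}" by simp
  then show ?thesis by (simp add: mperm_def)
qed

lemma mperm_mperm [simp]: "mperm i j (mperm i j m) = m"
  by (rule poly_mapping_eqI) simp

lemma mperm_add: "mperm i j (p + q) = mperm i j p + mperm i j q"
  by (rule poly_mapping_eqI) (simp add: lookup_add)

lemma mperm_0 [simp]: "mperm i j 0 = 0"
  by (rule poly_mapping_eqI) simp

lemma ks_mperm: "ks (mperm i j m) = tr i j ` ks m"
proof (intro set_eqI iffI)
  fix x assume "x \<in> ks (mperm i j m)"
  then show "x \<in> tr i j ` ks m" by (intro image_eqI[of _ _ "tr i j x"]) (simp_all add: in_keys_iff)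
next
  fix x assume "x \<in> tr i j ` ks m" then show "x \<in> ks (mperm i j m)" by (auto simp: in_keys_iff)
qed

lemma mdeg_mperm: "mdeg (mperm i j m) = mdeg m"
proof -
  have "mdeg (mperm i j m) = (\<Sum>x\<in>tr i j ` ks m. lk m (tr i j x))"
    by (simp add: wsum_def ks_mperm)
  also have "\<dots> = (\<Sum>x\<in>ks m. lk m (tr i j (tr i j x)))"
    by (subst sum.reindex) (auto intro: inj_on_subset[OF bij_is_inj[OF bij_tr]])
  finally show ?thesis by (simp add: wsum_def)
qed

abbreviation rn :: "nat \<Rightarrow> nat \<Rightarrow> 'a::comm_ring_1 ps \<Rightarrow> 'a ps" where
  "rn i j \<equiv> cop (\<lambda>_. True) (mperm i j)"

lemma rn_mult: "rn i j (x * y) = rn i j x * rn i j y"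
proof (rule ps_eqI)
  fix m
  have "cf (rn i j (x * y)) m = (\<Sum>(p, q)\<in>Pr (mperm i j m). cf x p * cf y q)"
    by (simp add: cf_cop cf_mult)
  also have "\<dots> = (\<Sum>(p, q)\<in>Pr m. cf x (mperm i j p) * cf y (mperm i j q))"
    by (rule sum.reindex_bij_witness[of _ "\<lambda>(p, q). (mperm i j p, mperm i j q)" "\<lambda>(p, q). (mperm i j p, mperm i j q)"])
       (auto simp: Pr_def mperm_add[symmetric])
  also have "\<dots> = cf (rn i j x * rn i j y) m"
    by (simp add: cf_cop cf_mult)
  finally show "cf (rn i j (x * y)) m = cf (rn i j x * rn i j y) m" .
qed

lemma rn_one: "rn i j 1 = 1"
  by (rule ps_eqI) (simp add: cf_cop cf_one, metis mperm_0 mperm_mperm)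

lemma rn_sub: "nice h \<Longrightarrow> rn i j (sub f h) = sub f (\<lambda>k. rn i j (h k))"
  by (rule cop_sub[OF rn_mult rn_one]) (simp only: mdeg_mperm order_refl)

lemma rn_nice: "nice h \<Longrightarrow> nice (\<lambda>k. rn i j (h k))"
  by (rule cop_nice) (simp only: mdeg_mperm order_refl)

lemma tr_eq_iff: "tr i j x = k \<longleftrightarrow> x = tr i j k"
  by (metis tr_tr)

lemma mperm_single: "mperm i j (Poly_Mapping.single k n) = Poly_Mapping.single (tr i j k) n"
  by (rule poly_mapping_eqI) (simp add: lookup_single when_def tr_eq_iff eq_commute[of k])

lemma rn_X: "rn i j (X k) = X (tr i j k)"
proof (rule ps_eqI)
  fix m
  have "(mperm i j m = Poly_Mapping.single k 1) \<longleftrightarrow> (m = Poly_Mapping.single (tr i j k) 1)"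
    by (metis mperm_mperm mperm_single)
  then show "cf (rn i j (X k)) m = cf (X (tr i j k)) m"
    by (simp add: cf_cop X_def cf_mon)
qed

lemma rn_id: assumes "\<And>m. cf x m \<noteq> 0 \<Longrightarrow> i \<notin> ks m \<and> j \<notin> ks m" shows "rn i j x = x"
proof (rule ps_eqI)
  fix m
  show "cf (rn i j x) m = cf x m"
  proof (cases "i \<in> ks m \<or> j \<in> ks m")
    case True
    then have "i \<in> ks (mperm i j m) \<or> j \<in> ks (mperm i j m)"
      by (auto simp: ks_mperm image_iff tr_def)
    then have b: "cf x (mperm i j m) = 0" using assms[of "mperm i j m"] by blast
    have a: "cf x m = 0" using assms[of m] True by blast
    show ?thesis by (simp add: cf_cop a b)
  next
    case False
    then have "mperm i j m = m"
      by (intro poly_mapping_eqI) (auto simp: tr_def in_keys_iff)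
    then show ?thesis by (simp add: cf_cop)
  qed
qed

abbreviation rs :: "nat \<Rightarrow> 'a::comm_ring_1 ps \<Rightarrow> 'a ps" where
  "rs d \<equiv> cop (\<lambda>m. d \<notin> ks m) id"

lemma rs_mult: "rs d (x * y) = rs d x * rs d y"
proof (rule ps_eqI)
  fix m
  show "cf (rs d (x * y)) m = cf (rs d x * rs d y) m"
  proof (cases "d \<in> ks m")
    case True
    then show ?thesis
      by (auto simp: cf_cop cf_mult Pr_def ks_add intro!: sum.neutral)
  next
    case False
    then show ?thesis
      by (auto simp: cf_cop cf_mult Pr_def ks_add intro!: sum.cong)
  qed
qed

lemma rs_one: "rs d 1 = 1"
  by (rule ps_eqI) (auto simp: cf_cop cf_one)

lemma rs_sub: "nice h \<Longrightarrow> rs d (sub f h) = sub f (\<lambda>k. rs d (h k))"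
  by (rule cop_sub[OF rs_mult rs_one]) (simp only: id_apply order_refl)

lemma rs_nice: "nice h \<Longrightarrow> nice (\<lambda>k. rs d (h k))"
  by (rule cop_nice) (simp only: id_apply order_refl)


definition pair :: "'a::comm_ring_1 ps \<Rightarrow> 'a ps \<Rightarrow> nat \<Rightarrow> 'a ps" where
  "pair a b = (\<lambda>i. if i = 0 then a else if i = 1 then b else 0)"

lemma pair_0 [simp]: "pair a b 0 = a" and pair_1 [simp]: "pair a b (Suc 0) = b"
  by (simp_all add: pair_def)

lemma hpow_single' [simp]: "hpow h (Poly_Mapping.single i (Suc 0)) = h i"
  using hpow_single[of h i] by simp

lemma mps_subst_cf: "mps_subst f (\<lambda>i. cf (h i)) = cf (sub (PSA f) h)"
  by (simp add: sub_def)

lemma cf_X: "cf (X i) = mps_var i"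
  by (rule ext) (simp add: X_def cf_mon mps_var_def)

lemma cf_pair: "(\<lambda>i. cf (pair a b i)) = pair_subst (cf a) (cf b)"
  by (rule ext) (simp add: pair_def pair_subst_def cf_zero_eq)

lemma pair_subst_cf: "pair_subst (cf a) (cf b) = (\<lambda>i. cf (pair a b i))"
  by (simp add: cf_pair)

lemma nice_pair: "cf a 0 = 0 \<Longrightarrow> cf b 0 = 0 \<Longrightarrow> nice (pair a b)"
  unfolding nice_def
  by (auto simp: pair_def intro: finite_subset[of _ "{0, 1}"])

lemma single_ne0 [simp]: "Poly_Mapping.single i (Suc 0) \<noteq> 0"
  by (metis lookup_single_eq lookup_zero nat.distinct(1))

lemma cf_X0 [simp]: "cf (X i) 0 = 0"
  by (simp add: X_def cf_mon)

lemma sub_pair_comp: "nice h \<Longrightarrow> (\<lambda>i. sub (pair a b i) h) = pair (sub a h) (sub b h)"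
  by (rule ext) (simp add: pair_def)

lemma cop_pair: "(\<lambda>i. cop P \<pi> (pair a b i)) = pair (cop P \<pi> a) (cop P \<pi> b)"
  by (rule ext) (simp add: pair_def)

definition trip :: "'a::comm_ring_1 ps \<Rightarrow> 'a ps \<Rightarrow> 'a ps \<Rightarrow> nat \<Rightarrow> 'a ps" where
  "trip a b c = (\<lambda>i. if i = 0 then a else if i = 1 then b else if i = 2 then c else 0)"

lemma trip_0 [simp]: "trip a b c 0 = a" and trip_1 [simp]: "trip a b c (Suc 0) = b"
  and trip_2 [simp]: "trip a b c 2 = c"
  by (simp_all add: trip_def)

lemma nice_trip: "cf a 0 = 0 \<Longrightarrow> cf b 0 = 0 \<Longrightarrow> cf c 0 = 0 \<Longrightarrow> nice (trip a b c)"
  unfolding nice_def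
  by (auto simp: trip_def intro: finite_subset[of _ "{0, 1, 2}"])

lemma mdeg_1_iff: "mdeg k = 1 \<longleftrightarrow> (\<exists>i. k = Poly_Mapping.single i 1)"
proof
  assume a: "mdeg k = 1"
  then have "k \<noteq> 0" by auto
  then obtain i where i: "i \<in> ks k" by (metis all_not_in_conv keys_eq_empty)
  have "mdeg k = lk k i + (\<Sum>x\<in>ks k - {i}. lk k x)"
    unfolding wsum_def using i by (simp add: sum.remove)
  moreover have "lk k i \<ge> 1" using i by (simp add: in_keys_iff)
  ultimately have li: "lk k i = 1" and rest: "(\<Sum>x\<in>ks k - {i}. lk k x) = 0" using a by linarith+
  have "lk k x = 0" if "x \<noteq> i" for x
  proof (rule ccontr)
    assume "lk k x \<noteq> 0"
    then have "x \<in> ks k - {i}" using that by (simp add: in_keys_iff)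
    then have "lk k x \<le> (\<Sum>x\<in>ks k - {i}. lk k x)" by (intro member_le_sum) auto
    then show False using rest \<open>lk k x \<noteq> 0\<close> by simp
  qed
  then have "k = Poly_Mapping.single i 1"
    by (intro poly_mapping_eqI) (auto simp: lookup_single when_def li)
  then show "\<exists>i. k = Poly_Mapping.single i 1" by blast
qed auto

lemma KS_01: "KS {0, 1} 1 = {0, Poly_Mapping.single 0 1, Poly_Mapping.single 1 1}"
proof (intro set_eqI iffI)
  fix k assume "k \<in> KS {0, 1} 1"
  then have k: "ks k \<subseteq> {0, 1}" "mdeg k \<le> 1" by (auto simp: KS_def)
  show "k \<in> {0, Poly_Mapping.single 0 1, Poly_Mapping.single 1 1}"
  proof (cases "mdeg k = 0")
    case True then show ?thesis by simp
  next
    case False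
    then have "mdeg k = 1" using k(2) by linarith
    then obtain i where "k = Poly_Mapping.single i 1" using mdeg_1_iff by blast
    then show ?thesis using k by auto
  qed
qed (auto simp: KS_def)

section \<open>The formal group law\<close>

locale fgl =
  fixes F :: "'a::comm_ring_1 mps"
  assumes law: "formal_group_law F"
begin

definition Fp :: "'a ps" where "Fp = PSA F"

lemma A1: "sub Fp (pair (X 0) 0) = X 0"
proof -
  have "mps_subst F (pair_subst (mps_var 0) (mps_const 0)) = mps_var 0"
    using law unfolding formal_group_law_def by blast
  then have "cf (sub Fp (pair (X 0) 0)) = cf (X 0)"
    by (simp add: Fp_def cf_X[symmetric] cf_zero_eq[symmetric] pair_subst_cf mps_subst_cf)
  then show ?thesis by (simp add: cf_inject)
qed

lemma A2: "sub Fp (pair 0 (X 1)) = X 1"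
proof -
  have "mps_subst F (pair_subst (mps_const 0) (mps_var 1)) = mps_var 1"
    using law unfolding formal_group_law_def by blast
  then have "cf (sub Fp (pair 0 (X 1))) = cf (X 1)"
    by (simp add: Fp_def cf_X[symmetric] cf_zero_eq[symmetric] pair_subst_cf mps_subst_cf)
  then show ?thesis by (simp add: cf_inject)
qed

lemma A3: "sub Fp (pair (X 1) (X 0)) = Fp"
proof -
  have "mps_subst F (pair_subst (mps_var 1) (mps_var 0)) = F"
    using law unfolding formal_group_law_def by blast
  then have "cf (sub Fp (pair (X 1) (X 0))) = cf (Fp)"
    by (simp add: Fp_def cf_X[symmetric] cf_zero_eq[symmetric] pair_subst_cf mps_subst_cf)
  then show ?thesis by (simp add: cf_inject)
qed

lemma A4: "sub Fp (pair (sub Fp (pair (X 0) (X 1))) (X 2)) = sub Fp (pair (X 0) (sub Fp (pair (X 1) (X 2))))"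
proof -
  have "mps_subst F (pair_subst (mps_subst F (pair_subst (mps_var 0) (mps_var 1))) (mps_var 2))
       = mps_subst F (pair_subst (mps_var 0) (mps_subst F (pair_subst (mps_var 1) (mps_var 2))))"
    using law unfolding formal_group_law_def by blast
  then have "cf (sub Fp (pair (sub Fp (pair (X 0) (X 1))) (X 2))) = cf (sub Fp (pair (X 0) (sub Fp (pair (X 1) (X 2)))))"
    by (simp add: Fp_def cf_X[symmetric] pair_subst_cf mps_subst_cf)
  then show ?thesis by (metis cf_inverse)
qed

lemma F0: "cf Fp 0 = 0"
proof -
  have "cf (sub Fp (pair (X 0) 0)) 0 = cf Fp 0"
    by (rule sub_cf0) (rule nice_pair, simp_all)
  then show ?thesis using A1 by simp
qed

lemma nice_pairF: "cf a 0 = 0 \<Longrightarrow> cf b 0 = 0 \<Longrightarrow> cf (sub Fp (pair a b)) 0 = 0"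
  by (simp add: sub_cf0 nice_pair F0)

lemma comm_gen:
  assumes a: "cf a 0 = 0" and b: "cf b 0 = 0"
  shows "sub Fp (pair a b) = sub Fp (pair b a)"
proof -
  have n: "nice (pair a b)" by (rule nice_pair[OF a b])
  have n2: "nice (pair (X 1) (X 0))" by (rule nice_pair) simp_all
  have "sub (sub Fp (pair (X 1) (X 0))) (pair a b) = sub Fp (\<lambda>i. sub (pair (X 1) (X 0) i) (pair a b))"
    by (rule sub_assoc[OF n2 n])
  also have "(\<lambda>i. sub (pair (X 1) (X 0) i) (pair a b)) = pair b a"
    unfolding sub_pair_comp[OF n] by (simp add: n)
  finally have "sub (sub Fp (pair (X 1) (X 0))) (pair a b) = sub Fp (pair b a)" .
  then show ?thesis using A3 by simp
qed

lemma assoc_gen: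
  assumes a: "cf a 0 = 0" and b: "cf b 0 = 0" and c: "cf c 0 = 0"
  shows "sub Fp (pair (sub Fp (pair a b)) c) = sub Fp (pair a (sub Fp (pair b c)))"
proof -
  let ?T = "trip a b c"
  have T: "nice ?T" by (rule nice_trip[OF a b c])
  have n01: "nice (pair (X 0) (X 1))" and n12: "nice (pair (X 1) (X 2))"
    by (rule nice_pair, simp_all)+
  have nL: "nice (pair (sub Fp (pair (X 0) (X 1))) (X 2))"
    by (rule nice_pair) (simp_all add: nice_pairF)
  have nR: "nice (pair (X 0) (sub Fp (pair (X 1) (X 2))))"
    by (rule nice_pair) (simp_all add: nice_pairF)
  have L: "sub (sub Fp (pair (sub Fp (pair (X 0) (X 1))) (X 2))) ?T = sub Fp (pair (sub Fp (pair a b)) c)"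
    unfolding sub_assoc[OF nL T] sub_pair_comp[OF T] sub_assoc[OF n01 T] sub_pair_comp[OF T]
    by (simp add: T)
  have R: "sub (sub Fp (pair (X 0) (sub Fp (pair (X 1) (X 2))))) ?T = sub Fp (pair a (sub Fp (pair b c)))"
    unfolding sub_assoc[OF nR T] sub_pair_comp[OF T] sub_assoc[OF n12 T] sub_pair_comp[OF T]
    by (simp add: T)
  show ?thesis using L R A4 by simp
qed

lemma lin_raw:
  assumes n: "nice (pair a b)" and m: "mdeg m \<le> 1"
  shows "cf (sub Fp (pair a b)) m
     = cf Fp 0 * cf 1 m + cf Fp (Poly_Mapping.single 0 1) * cf a m + cf Fp (Poly_Mapping.single 1 1) * cf b m"
proof -
  have S: "{i. pair a b i \<noteq> 0} \<subseteq> {0, 1}" by (auto simp: pair_def split: if_splits)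
  have "cf (sub Fp (pair a b)) m = (\<Sum>k\<in>KS {0, 1} 1. cf Fp k * cf (hpow (pair a b) k) m)"
    by (rule sub_fin[OF n _ S m]) simp
  also have "\<dots> = cf Fp 0 * cf 1 m + cf Fp (Poly_Mapping.single 0 1) * cf a m + cf Fp (Poly_Mapping.single 1 1) * cf b m"
  proof -
    have d: "Poly_Mapping.single 0 1 \<noteq> (Poly_Mapping.single 1 1 :: mono)"
      by (metis lookup_single_eq lookup_single_not_eq zero_neq_one)
    have d0: "(0::mono) \<noteq> Poly_Mapping.single i 1" for i
      using single_ne0[of i] by simp
    show ?thesis unfolding KS_01 using d d0[of 0] d0[of 1]
      by (simp add: algebra_simps)
  qed
  finally show ?thesis .
qed

lemma Fe0: "cf Fp (Poly_Mapping.single 0 1) = 1"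
proof -
  have n: "nice (pair (X 0) 0)" by (rule nice_pair) simp_all
  have "cf (sub Fp (pair (X 0) 0)) (Poly_Mapping.single 0 1) = cf (X 0) (Poly_Mapping.single 0 1)"
    using A1 by simp
  then show ?thesis
    by (subst (asm) lin_raw[OF n]) (simp_all add: cf_one X_def cf_mon del: single_one)
qed

lemma Fe1: "cf Fp (Poly_Mapping.single 1 1) = 1"
proof -
  have n: "nice (pair 0 (X 1))" by (rule nice_pair) simp_all
  have "cf (sub Fp (pair 0 (X 1))) (Poly_Mapping.single 1 1) = cf (X 1) (Poly_Mapping.single 1 1)"
    using A2 by simp
  then show ?thesis
    by (subst (asm) lin_raw[OF n]) (simp_all add: cf_one X_def cf_mon del: single_one)
qed

lemma lin:
  assumes "cf a 0 = 0" "cf b 0 = 0" and m: "mdeg m \<le> 1"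
  shows "cf (sub Fp (pair a b)) m = cf a m + cf b m"
proof (cases "m = 0")
  case True then show ?thesis using assms by (simp add: sub_cf0 nice_pair F0)
next
  case False then show ?thesis
    using lin_raw[OF nice_pair[OF assms(1,2)] m] by (simp add: F0 Fe0[simplified] Fe1[simplified])
qed

end


lemma PS_cf_mult: "cf a \<in> PS V \<Longrightarrow> cf b \<in> PS V \<Longrightarrow> cf (a * b) \<in> PS V"
proof (unfold PS_def mem_Collect_eq, intro allI impI)
  fix m assume a: "\<forall>m. cf a m \<noteq> 0 \<longrightarrow> ks m \<subseteq> V" and b: "\<forall>m. cf b m \<noteq> 0 \<longrightarrow> ks m \<subseteq> V"
  assume nz: "cf (a * b) m \<noteq> 0"
  then obtain p q where pq: "(p, q) \<in> Pr m" "cf a p * cf b q \<noteq> 0"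
    unfolding cf_mult by (auto elim!: sum.not_neutral_contains_not_neutral)
  have "cf a p \<noteq> 0" "cf b q \<noteq> 0" using pq(2) by auto
  then have "ks p \<subseteq> V" "ks q \<subseteq> V" using a b by auto
  then show "ks m \<subseteq> V" using pq(1) by (auto simp: Pr_def ks_add)
qed

lemma PS_cf_one: "cf 1 \<in> PS V"
  by (simp add: PS_def cf_one)

lemma PS_cf_zero: "cf 0 \<in> PS V"
  by (simp add: PS_def)

lemma PS_cf_add: "cf a \<in> PS V \<Longrightarrow> cf b \<in> PS V \<Longrightarrow> cf (a + b) \<in> PS V"
proof (unfold PS_def mem_Collect_eq, intro allI impI)
  fix m assume a: "\<forall>m. cf a m \<noteq> 0 \<longrightarrow> ks m \<subseteq> V" and b: "\<forall>m. cf b m \<noteq> 0 \<longrightarrow> ks m \<subseteq> V"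
  assume "cf (a + b) m \<noteq> 0"
  then have "cf a m \<noteq> 0 \<or> cf b m \<noteq> 0" by auto
  then show "ks m \<subseteq> V" using a b by blast
qed

lemma PS_cf_diff: "cf a \<in> PS V \<Longrightarrow> cf b \<in> PS V \<Longrightarrow> cf (a - b) \<in> PS V"
proof (unfold PS_def mem_Collect_eq, intro allI impI)
  fix m assume a: "\<forall>m. cf a m \<noteq> 0 \<longrightarrow> ks m \<subseteq> V" and b: "\<forall>m. cf b m \<noteq> 0 \<longrightarrow> ks m \<subseteq> V"
  assume "cf (a - b) m \<noteq> 0"
  then have "cf a m \<noteq> 0 \<or> cf b m \<noteq> 0" by auto
  then show "ks m \<subseteq> V" using a b by blast
qed

lemma PS_cf_power: "cf a \<in> PS V \<Longrightarrow> cf (a ^ n) \<in> PS V"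
  by (induction n) (simp_all add: PS_cf_one PS_cf_mult)

lemma PS_cf_prod: "(\<And>i. i \<in> A \<Longrightarrow> cf (g i) \<in> PS V) \<Longrightarrow> cf (\<Prod>i\<in>A. g i) \<in> PS V"
  by (induction A rule: infinite_finite_induct) (simp_all add: PS_cf_one PS_cf_mult)

lemma PS_cf_X: "i \<in> V \<Longrightarrow> cf (X i) \<in> PS V"
  by (simp add: PS_def X_def cf_mon)

lemma PS_mono: "f \<in> PS V \<Longrightarrow> V \<subseteq> W \<Longrightarrow> f \<in> PS W"
  by (auto simp: PS_def)

lemma PS_cf_sub:
  assumes h: "nice h" and V: "\<And>i. cf (h i) \<in> PS V"
  shows "cf (sub f h) \<in> PS V"
proof (unfold PS_def mem_Collect_eq, intro allI impI)
  fix m assume nz: "cf (sub f h) m \<noteq> 0"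
  then obtain k where "cf f k * cf (hpow h k) m \<noteq> 0"
    unfolding sub_fin'[OF h order_refl] by (auto elim!: sum.not_neutral_contains_not_neutral)
  then have "cf (hpow h k) m \<noteq> 0" by auto
  moreover have "cf (hpow h k) \<in> PS V"
    unfolding hpow_def by (intro PS_cf_prod PS_cf_power V)
  ultimately show "ks m \<subseteq> V" by (auto simp: PS_def)
qed

lemma rn_conj:
  assumes "\<And>x. tr i j x = tr a b (tr c d (tr a b x))"
  shows "rn i j y = rn a b (rn c d (rn a b y))"
proof (rule ps_eqI)
  fix m
  have "mperm a b (mperm c d (mperm a b m)) = mperm i j m"
    by (rule poly_mapping_eqI) (simp add: assms)
  then show "cf (rn i j y) m = cf (rn a b (rn c d (rn a b y))) m"
    by (simp add: cf_cop)
qed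

lemma rn_same: "rn i i y = y"
proof (rule ps_eqI)
  fix m
  have "mperm i i m = m" by (rule poly_mapping_eqI) (simp add: tr_def)
  then show "cf (rn i i y) m = cf y m" by (simp add: cf_cop)
qed

lemma tr_comm: "tr i j = tr j i"
  by (rule ext) (simp add: tr_def)

lemma mperm_comm: "mperm i j = mperm j i"
  by (rule ext, rule poly_mapping_eqI) (simp add: tr_def)

context fgl
begin

definition IS :: "nat \<Rightarrow> 'a ps" where "IS n = PSA (iter_sum F n)"

lemma cf_IS: "cf (IS n) = iter_sum F n"
  by (simp add: IS_def)

lemma IS_0: "IS 0 = 0"
  by (rule ps_eqI) (simp add: cf_IS mps_const_def)

lemma IS_Suc: "IS (Suc n) = sub Fp (pair (IS n) (X n))"
proof -
  have "cf (IS (Suc n)) = mps_subst F (pair_subst (cf (IS n)) (cf (X n)))"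
    by (simp add: cf_IS cf_X)
  also have "\<dots> = cf (sub Fp (pair (IS n) (X n)))"
    by (simp only: pair_subst_cf mps_subst_cf Fp_def)
  finally have "cf (IS (Suc n)) = cf (sub Fp (pair (IS n) (X n)))" .
  then show ?thesis by (simp add: cf_inject)
qed

lemma IS_cf0: "cf (IS n) 0 = 0"
  by (induction n) (simp_all add: IS_0 IS_Suc nice_pairF)

lemma IS_lin: "mdeg m \<le> 1 \<Longrightarrow> cf (IS n) m = (\<Sum>i<n. cf (X i) m)"
  by (induction n) (simp_all add: IS_0 IS_Suc lin IS_cf0)

lemma IS_PS: "cf (IS n) \<in> PS {..<n}"
proof (induction n)
  case 0 then show ?case by (simp add: IS_0 PS_def)
next
  case (Suc n)
  have "cf (pair (IS n) (X n) i) \<in> PS {..<Suc n}" for i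
    using PS_mono[OF Suc] by (auto simp: pair_def PS_cf_X PS_cf_zero)
  then show ?case unfolding IS_Suc
    by (intro PS_cf_sub nice_pair) (simp_all add: IS_cf0)
qed

lemma rn_IS_high: assumes "n \<le> i" "n \<le> j" shows "rn i j (IS n) = IS n"
proof (rule rn_id)
  fix m assume "cf (IS n) m \<noteq> 0"
  then have "ks m \<subseteq> {..<n}" using IS_PS by (auto simp: PS_def)
  then show "i \<notin> ks m \<and> j \<notin> ks m" using assms by auto
qed

lemma rn_IS_step:
  assumes IH: "rn i j (IS n) = IS n" and "i \<noteq> n" "j \<noteq> n"
  shows "rn i j (IS (Suc n)) = IS (Suc n)"
proof -
  have n: "nice (pair (IS n) (X n))" by (rule nice_pair) (simp_all add: IS_cf0)
  have "tr i j n = n" using assms by (simp add: tr_def)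
  then show ?thesis
    unfolding IS_Suc rn_sub[OF n] cop_pair IH rn_X by simp
qed

lemma rn_IS_adj: "rn n (Suc n) (IS (Suc (Suc n))) = IS (Suc (Suc n))"
proof -
  let ?S = "IS n"
  have S0: "cf ?S 0 = 0" by (rule IS_cf0)
  have e: "IS (Suc (Suc n)) = sub Fp (pair ?S (sub Fp (pair (X n) (X (Suc n)))))"
    unfolding IS_Suc by (rule assoc_gen) (simp_all add: S0)
  have n1: "nice (pair ?S (sub Fp (pair (X n) (X (Suc n)))))"
    by (rule nice_pair) (simp_all add: S0 nice_pairF)
  have n2: "nice (pair (X n) (X (Suc n)))" by (rule nice_pair) simp_all
  have hi: "rn n (Suc n) ?S = ?S" by (rule rn_IS_high) simp_all
  have "rn n (Suc n) (sub Fp (pair (X n) (X (Suc n)))) = sub Fp (pair (X (Suc n)) (X n))"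
    unfolding rn_sub[OF n2] cop_pair rn_X by (simp add: tr_def)
  also have "\<dots> = sub Fp (pair (X n) (X (Suc n)))"
    by (rule comm_gen) simp_all
  finally have inner: "rn n (Suc n) (sub Fp (pair (X n) (X (Suc n)))) = sub Fp (pair (X n) (X (Suc n)))" .
  show ?thesis
    unfolding e rn_sub[OF n1] cop_pair hi inner ..
qed

lemma IS_sym: "i < n \<Longrightarrow> j < n \<Longrightarrow> rn i j (IS n) = IS n"
proof (induction n arbitrary: i j)
  case 0 then show ?case by simp
next
  case (Suc n)
  have main: "rn i n (IS (Suc n)) = IS (Suc n)" if lt: "i < n" for i
  proof (cases "i = n - 1")
    case True
    then obtain n' where n': "n = Suc n'" using lt by (cases n) auto
    then show ?thesis using rn_IS_adj[of n'] True by simp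
  next
    case False
    then obtain n' where n': "n = Suc n'" "i < n'" using lt by (cases n) auto
    have conj: "rn i n y = rn n' n (rn i n' (rn n' n y))" for y :: "'a ps"
      by (rule rn_conj) (use n' in \<open>auto simp: tr_def\<close>)
    have a: "rn n' n (IS (Suc n)) = IS (Suc n)" using rn_IS_adj[of n'] n' by simp
    have b: "rn i n' (IS (Suc n)) = IS (Suc n)"
      by (rule rn_IS_step) (use Suc.IH n' in auto)
    show ?thesis unfolding conj a b a ..
  qed
  show ?case
  proof (cases "i < n \<and> j < n")
    case True
    then show ?thesis by (intro rn_IS_step Suc.IH) auto
  next
    case False
    then consider "i = n" "j < n" | "j = n" "i < n" | "i = n" "j = n" using Suc.prems by linarith
    then show ?thesis
    proof cases
      case 1 then show ?thesis using main[of j] by (simp add: mperm_comm)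
    next
      case 2 then show ?thesis using main[of i] by simp
    next
      case 3 then show ?thesis by (simp add: rn_same)
    qed
  qed
qed

end


section \<open>Elementary symmetric functions\<close>

definition sq :: "nat \<Rightarrow> nat \<Rightarrow> mono \<Rightarrow> bool" where
  "sq d k m \<longleftrightarrow> ks m \<subseteq> {..<d} \<and> card (ks m) = k \<and> (\<forall>i. lk m i \<le> 1)"

definition es :: "nat \<Rightarrow> nat \<Rightarrow> 'a::comm_ring_1 ps" where
  "es d k = PSA (elem_sym d k)"

lemma cf_es: "cf (es d k) m = (if sq d k m then 1 else 0)"
  by (simp add: es_def elem_sym_def sq_def)

definition ssub :: "nat \<Rightarrow> nat \<Rightarrow> 'a::comm_ring_1 ps" where
  "ssub d = (\<lambda>k. if 1 \<le> k \<and> k \<le> d then es d k else 0)"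

lemma cf_ssub: "(\<lambda>i. cf (ssub d i)) = sym_subst d"
  by (rule ext) (simp add: ssub_def sym_subst_def es_def cf_zero_eq)

lemma sq_mdeg: "sq d k m \<Longrightarrow> mdeg m = k"
proof -
  assume a: "sq d k m"
  have "\<forall>i\<in>ks m. lk m i = 1" using a by (auto simp: sq_def in_keys_iff le_Suc_eq)
  then have "mdeg m = (\<Sum>i\<in>ks m. 1)" unfolding wsum_def by simp
  then show ?thesis using a by (simp add: sq_def)
qed

lemma es_cf0: "1 \<le> k \<Longrightarrow> cf (es d k) 0 = 0"
  by (simp add: cf_es sq_def)

lemma nice_ssub: "nice (ssub d :: nat \<Rightarrow> 'a::comm_ring_1 ps)"
  unfolding nice_def
  by (auto simp: ssub_def es_cf0 intro: finite_subset[of _ "{1..d}"])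

lemma es_big: "d < k \<Longrightarrow> es d k = 0"
proof (rule ps_eqI)
  fix m assume "d < k"
  have "\<not> sq d k m"
  proof
    assume "sq d k m"
    then have "card (ks m) \<le> card {..<d}" "card (ks m) = k"
      using card_mono[of "{..<d}" "ks m"] by (auto simp: sq_def)
    then show False using \<open>d < k\<close> by simp
  qed
  then show "cf (es d k) m = cf 0 m" by (simp add: cf_es)
qed

lemma tr_lt: "i < d \<Longrightarrow> j < d \<Longrightarrow> tr i j x < d \<longleftrightarrow> x < d"
  by (auto simp: tr_def)

lemma sq_mperm: assumes "i < d" "j < d" shows "sq d k (mperm i j m) \<longleftrightarrow> sq d k m"
proof -
  have inj: "inj_on (tr i j) A" for A by (rule inj_on_subset[OF bij_is_inj[OF bij_tr]]) simp
  have sub: "tr i j ` ks m \<subseteq> {..<d} \<longleftrightarrow> ks m \<subseteq> {..<d}"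
    using tr_lt[OF assms] by auto
  have le: "(\<forall>x. lk m (tr i j x) \<le> 1) \<longleftrightarrow> (\<forall>x. lk m x \<le> 1)"
    by (metis tr_tr)
  show ?thesis
    unfolding sq_def ks_mperm lk_mperm sub le card_image[OF inj] ..
qed

lemma rn_es: "i < d \<Longrightarrow> j < d \<Longrightarrow> rn i j (es d k) = es d k"
  by (rule ps_eqI) (simp add: cf_cop cf_es sq_mperm)

lemma rn_ssub: "i < d \<Longrightarrow> j < d \<Longrightarrow> (\<lambda>k. rn i j (ssub d k)) = ssub d"
  by (rule ext) (simp add: ssub_def rn_es)

lemma rs_es: "rs d (es (Suc d) k) = es d k"
proof (rule ps_eqI)
  fix m
  have "(d \<notin> ks m \<and> sq (Suc d) k m) \<longleftrightarrow> sq d k m"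
    by (auto simp: sq_def less_Suc_eq)
  then show "cf (rs d (es (Suc d) k)) m = cf (es d k) m"
    by (auto simp: cf_cop cf_es)
qed

lemma rs_ssub: "(\<lambda>k. rs d (ssub (Suc d) k)) = ssub d"
proof (rule ext)
  fix k
  show "rs d (ssub (Suc d) k) = ssub d k"
    by (cases "k = Suc d") (auto simp: ssub_def rs_es es_big)
qed

definition Em :: "nat \<Rightarrow> mono" where
  "Em d = Abs_poly_mapping (\<lambda>i. if i < d then 1 else 0)"

lemma lk_Em: "lk (Em d) i = (if i < d then 1 else 0)"
proof -
  have "finite {i. (if i < d then 1 else 0::nat) \<noteq> 0}" by simp
  then show ?thesis by (simp add: Em_def)
qed

lemma ks_Em: "ks (Em d) = {..<d}"
  by (auto simp: in_keys_iff lk_Em split: if_splits)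

lemma mdeg_Em: "mdeg (Em d) = d"
  by (simp add: wsum_def ks_Em lk_Em)

lemma es_top: "es (Suc d) (Suc d) = mon (Em (Suc d))"
proof (rule ps_eqI)
  fix m
  have "sq (Suc d) (Suc d) m \<longleftrightarrow> m = Em (Suc d)"
  proof
    assume a: "sq (Suc d) (Suc d) m"
    then have "ks m = {..<Suc d}"
      by (intro card_subset_eq) (auto simp: sq_def)
    then show "m = Em (Suc d)"
      using a by (intro poly_mapping_eqI) (auto simp: lk_Em sq_def in_keys_iff le_Suc_eq)
  next
    assume "m = Em (Suc d)"
    then show "sq (Suc d) (Suc d) m" by (simp add: sq_def ks_Em lk_Em)
  qed
  then show "cf (es (Suc d) (Suc d)) m = cf (mon (Em (Suc d))) m"
    by (simp add: cf_es cf_mon)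
qed

lemma mperm_Em: "i < d \<Longrightarrow> j < d \<Longrightarrow> mperm i j (Em d) = Em d"
  by (rule poly_mapping_eqI) (simp add: lk_Em tr_lt)

lemma PS_ssub: "cf (ssub d k) \<in> PS {..<d}"
  by (auto simp: ssub_def PS_def cf_es sq_def)

definition hom :: "nat \<Rightarrow> 'a::comm_ring_1 ps \<Rightarrow> bool" where
  "hom n x \<longleftrightarrow> (\<forall>m. cf x m \<noteq> 0 \<longrightarrow> mdeg m = n)"

lemma hom_mult: "hom A a \<Longrightarrow> hom B b \<Longrightarrow> hom (A + B) (a * b)"
proof (unfold hom_def, intro allI impI)
  fix m assume a: "\<forall>m. cf a m \<noteq> 0 \<longrightarrow> mdeg m = A" and b: "\<forall>m. cf b m \<noteq> 0 \<longrightarrow> mdeg m = B"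
  assume "cf (a * b) m \<noteq> 0"
  then obtain p q where pq: "(p, q) \<in> Pr m" "cf a p * cf b q \<noteq> 0"
    unfolding cf_mult by (auto elim!: sum.not_neutral_contains_not_neutral)
  have "cf a p \<noteq> 0" "cf b q \<noteq> 0" using pq(2) by auto
  then show "mdeg m = A + B" using a b pq(1) by (auto simp: Pr_def wsum_add)
qed

lemma hom_one: "hom 0 1" by (simp add: hom_def cf_one)

lemma hom_power: "hom A a \<Longrightarrow> hom (n * A) (a ^ n)"
  by (induction n) (simp_all add: hom_one hom_mult)

lemma hom_prod: "(\<And>i. i \<in> I \<Longrightarrow> hom (w i) (g i)) \<Longrightarrow> hom (\<Sum>i\<in>I. w i) (\<Prod>i\<in>I. g i)"
  by (induction I rule: infinite_finite_induct) (simp_all add: hom_one hom_mult)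

lemma hom_hpow: assumes "\<And>i. hom (w i) (h i)" shows "hom (wsum w k) (hpow h k)"
proof -
  have "hom (\<Sum>i\<in>ks k. lk k i * w i) (\<Prod>i\<in>ks k. h i ^ lk k i)"
    by (intro hom_prod hom_power assms)
  then show ?thesis by (simp add: hpow_def wsum_def mult.commute)
qed

lemma hom_ssub: "hom k (ssub d k)"
  by (auto simp: hom_def ssub_def cf_es sq_mdeg[simplified])

lemma hom_hpow_ssub: "hom (wsum id k) (hpow (ssub d) k)"
  by (rule hom_hpow) (simp add: hom_ssub)


lemma mdeg_Em' [simp]: "wsum (\<lambda>_. Suc 0) (Em d) = d"
  using mdeg_Em[of d] by simp

definition symm :: "nat \<Rightarrow> 'a::comm_ring_1 ps \<Rightarrow> bool" where
  "symm d x \<longleftrightarrow> (\<forall>i j. i < d \<longrightarrow> j < d \<longrightarrow> rn i j x = x)"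

definition whom :: "nat \<Rightarrow> 'a::comm_ring_1 ps \<Rightarrow> bool" where
  "whom n s \<longleftrightarrow> (\<forall>k. cf s k \<noteq> 0 \<longrightarrow> wsum id k = n)"

lemma sub_hom: assumes "whom n s" shows "hom n (sub s (ssub d))"
proof (unfold hom_def, intro allI impI)
  fix m assume "cf (sub s (ssub d)) m \<noteq> 0"
  then obtain k where "cf s k * cf (hpow (ssub d) k) m \<noteq> 0"
    unfolding sub_fin'[OF nice_ssub order_refl] by (auto elim!: sum.not_neutral_contains_not_neutral)
  then have "cf s k \<noteq> 0" "cf (hpow (ssub d) k) m \<noteq> (0::'a)" by auto
  then show "mdeg m = n" using assms hom_hpow_ssub[of k d] by (auto simp: whom_def hom_def)
qed

lemma symm_sub: "symm d (sub s (ssub d))"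
  by (simp add: symm_def rn_sub[OF nice_ssub] rn_ssub)

lemma rs_rn_comm: assumes "i < d" "j < d" shows "rn i j (rs d x) = rs d (rn i j x)"
proof (rule ps_eqI)
  fix m
  have "d \<in> ks (mperm i j m) \<longleftrightarrow> d \<in> ks m"
    using assms by (simp add: in_keys_iff tr_def)
  then show "cf (rn i j (rs d x)) m = cf (rs d (rn i j x)) m"
    by (simp add: cf_cop)
qed

lemma HOM:
  fixes f :: "'a::comm_ring_1 ps"
  shows "cf f \<in> PS {..<d} \<Longrightarrow> symm d f \<Longrightarrow> hom n f \<Longrightarrow>
    \<exists>s. cf s \<in> PS {1..d} \<and> whom n s \<and> sub s (ssub d) = f"
proof (induction d arbitrary: n f)
  case 0
  have z: "cf f m = 0" if "m \<noteq> 0" for m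
    using 0(1) that by (auto simp: PS_def)
  have f: "f = cst (cf f 0)"
    by (rule ps_eqI) (auto simp: cf_cst z)
  have "whom n f"
  proof (unfold whom_def, intro allI impI)
    fix k assume "cf f k \<noteq> 0"
    then have "k = 0" using z by blast
    then show "wsum id k = n" using 0(3) \<open>cf f k \<noteq> 0\<close> by (auto simp: hom_def)
  qed
  moreover have "cf f \<in> PS {1..0}" using 0(1) by simp
  moreover have "sub f (ssub 0) = f"
    by (subst (1 2) f) (simp add: nice_ssub)
  ultimately show ?case by blast
next
  case (Suc d)
  let ?E = "Em (Suc d)"
  have "\<forall>f :: 'a ps. cf f \<in> PS {..<Suc d} \<longrightarrow> symm (Suc d) f \<longrightarrow> hom n f \<longrightarrow>
          (\<exists>s. cf s \<in> PS {1..Suc d} \<and> whom n s \<and> sub s (ssub (Suc d)) = f)" for n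
  proof (induction n rule: less_induct)
    case (less n)
    show ?case
    proof (intro allI impI)
      fix f :: "'a ps"
      assume fP: "cf f \<in> PS {..<Suc d}" and fS: "symm (Suc d) f" and fH: "hom n f"
      define f' where "f' = rs d f"
      have f'P: "cf f' \<in> PS {..<d}"
        using fP by (auto simp: f'_def PS_def cf_cop) (metis lessThan_iff less_Suc_eq subsetD)
      have f'S: "symm d f'"
        using fS by (simp add: symm_def f'_def rs_rn_comm)
      have f'H: "hom n f'"
        using fH by (simp add: hom_def f'_def cf_cop)
      obtain s' where s'P: "cf s' \<in> PS {1..d}" and s'H: "whom n s'" and s'E: "sub s' (ssub d) = f'"
        using Suc.IH[OF f'P f'S f'H] by blast
      define g where "g = sub s' (ssub (Suc d))"
      have gP: "cf g \<in> PS {..<Suc d}"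
        unfolding g_def by (intro PS_cf_sub nice_ssub PS_ssub)
      have gS: "symm (Suc d) g" by (simp add: g_def symm_sub)
      have gH: "hom n g" by (simp add: g_def sub_hom[OF s'H])
      have g_rs: "rs d g = f'"
        by (simp add: g_def rs_sub[OF nice_ssub] rs_ssub s'E)
      define r where "r = f - g"
      have rP: "cf r \<in> PS {..<Suc d}" by (simp add: r_def PS_cf_diff fP gP)
      have rS: "rn i j r = r" if "i < Suc d" "j < Suc d" for i j
        using fS gS that by (simp add: r_def cop_diff symm_def)
      have rH: "hom n r"
        using fH gH by (auto simp: hom_def r_def) (metis)
      have r_rs: "rs d r = 0" by (simp add: r_def cop_diff g_rs f'_def)
      have zero_d: "cf r m = 0" if "d \<notin> ks m" for m
        using arg_cong[OF r_rs, of "\<lambda>x. cf x m"] that by (simp add: cf_cop)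
      have full: "?E \<in> Dv m" if nz: "cf r m \<noteq> 0" for m
      proof -
        have ge: "lk m i \<ge> 1" if "i < Suc d" for i
        proof (rule ccontr)
          assume "\<not> lk m i \<ge> 1"
          then have mi: "lk m i = 0" by simp
          show False
          proof (cases "i = d")
            case True then show False using zero_d[of m] nz mi by (simp add: in_keys_iff)
          next
            case False
            let ?m' = "mperm i d m"
            have "cf r ?m' = cf (rn i d r) m" by (simp add: cf_cop)
            also have "\<dots> = cf r m" using rS[of i d] that by simp
            finally have "cf r ?m' \<noteq> 0" using nz by simp
            moreover have "d \<notin> ks ?m'" using mi by (simp add: in_keys_iff tr_def)
            ultimately show False using zero_d by blast
          qed
        qed
        have "m = ?E + (m - ?E)"
          by (rule poly_mapping_eqI) (auto simp: lookup_add lookup_minus lk_Em dest: ge)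
        then show ?thesis by (auto simp: Dv_def)
      qed
      define r' where "r' = PSA (\<lambda>m. cf r (m + ?E))"
      have cf_r': "cf r' m = cf r (m + ?E)" for m by (simp add: r'_def)
      have r_eq: "r = mon ?E * r'"
      proof (rule ps_eqI)
        fix m
        show "cf r m = cf (mon ?E * r') m"
        proof (cases "?E \<in> Dv m")
          case True
          then obtain q where q: "m = ?E + q" by (auto simp: Dv_def)
          then show ?thesis using True by (simp add: cf_mon_mult cf_r' add.commute)
        next
          case False
          then show ?thesis using full by (auto simp: cf_mon_mult)
        qed
      qed
      have r'P: "cf r' \<in> PS {..<Suc d}"
        using rP unfolding PS_def mem_Collect_eq cf_r' by (metis Un_subset_iff ks_add)
      have r'S: "symm (Suc d) r'"
      proof (unfold symm_def, intro allI impI ps_eqI)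
        fix i j m assume ij: "i < Suc d" "j < Suc d"
        have "cf (rn i j r') m = cf r (mperm i j (m + ?E))"
          by (simp add: cf_cop cf_r' mperm_add mperm_Em ij)
        also have "\<dots> = cf (rn i j r) (m + ?E)" by (simp add: cf_cop)
        also have "\<dots> = cf r' m" using rS[OF ij] by (simp add: cf_r')
        finally show "cf (rn i j r') m = cf r' m" .
      qed
      have r'H: "hom (n - Suc d) r'"
        using rH by (auto simp: hom_def cf_r' wsum_add mdeg_Em)
      show "\<exists>s. cf s \<in> PS {1..Suc d} \<and> whom n s \<and> sub s (ssub (Suc d)) = f"
      proof (cases "n < Suc d")
        case True
        have "r = 0"
        proof (rule ps_eqI)
          fix m
          show "cf r m = cf 0 m"
          proof (rule ccontr)
            assume "cf r m \<noteq> cf 0 m"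
            then have nz: "cf r m \<noteq> 0" by simp
            then obtain q where "m = ?E + q" using full by (auto simp: Dv_def)
            then have "mdeg m \<ge> Suc d" by (simp add: wsum_add mdeg_Em)
            moreover have "mdeg m = n" using rH nz by (simp add: hom_def)
            ultimately show False using True by simp
          qed
        qed
        then have "f = g" by (simp add: r_def)
        moreover have "cf s' \<in> PS {1..Suc d}" using s'P by (rule PS_mono) auto
        ultimately show ?thesis using s'H by (auto simp: g_def)
      next
        case False
        then have lt: "n - Suc d < n" by simp
        obtain s'' where s''P: "cf s'' \<in> PS {1..Suc d}" and s''H: "whom (n - Suc d) s''"
          and s''E: "sub s'' (ssub (Suc d)) = r'"
          using less[OF lt, rule_format, OF r'P r'S r'H] by blast
        define s where "s = s' + X (Suc d) * s''"
        have sP: "cf s \<in> PS {1..Suc d}"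
          unfolding s_def
          by (intro PS_cf_add PS_cf_mult PS_cf_X s''P PS_mono[OF s'P]) auto
        have sH: "whom n s"
        proof (unfold whom_def, intro allI impI)
          fix k assume "cf s k \<noteq> 0"
          then consider "cf s' k \<noteq> 0" | "cf (X (Suc d) * s'') k \<noteq> 0" by (auto simp: s_def) (metis add.right_neutral)
          then show "wsum id k = n"
          proof cases
            case 1 then show ?thesis using s'H by (simp add: whom_def)
          next
            case 2
            then have inD: "Poly_Mapping.single (Suc d) 1 \<in> Dv k"
              and nz: "cf s'' (k - Poly_Mapping.single (Suc d) 1) \<noteq> 0"
              by (auto simp: X_def cf_mon_mult split: if_splits)
            then obtain q where q: "k = Poly_Mapping.single (Suc d) 1 + q" by (auto simp: Dv_def)
            have "wsum id q = n - Suc d" using nz s''H q by (simp add: whom_def)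
            then show ?thesis using q False by (simp add: wsum_add)
          qed
        qed
        have "sub s (ssub (Suc d)) = g + ssub (Suc d) (Suc d) * r'"
          by (simp add: s_def sub_add sub_mult nice_ssub s''E g_def)
        also have "ssub (Suc d) (Suc d) = mon ?E" by (simp add: ssub_def es_top)
        also have "g + mon ?E * r' = f" by (simp add: r_eq[symmetric] r_def)
        finally show ?thesis using sP sH by blast
      qed
    qed
  qed
  then show ?case using Suc.prems by blast
qed

definition hc :: "nat \<Rightarrow> 'a::comm_ring_1 ps \<Rightarrow> 'a ps" where
  "hc n f = PSA (\<lambda>m. if mdeg m = n then cf f m else 0)"

lemma SYM:
  fixes f :: "'a::comm_ring_1 ps"
  assumes fP: "cf f \<in> PS {..<d}" and fS: "symm d f"
  shows "\<exists>s. cf s \<in> PS {1..d} \<and> sub s (ssub d) = f"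
proof -
  have "\<exists>s. cf s \<in> PS {1..d} \<and> whom n s \<and> sub s (ssub d) = hc n f" for n
  proof (rule HOM)
    show "cf (hc n f) \<in> PS {..<d}" using fP by (auto simp: PS_def hc_def)
    show "hom n (hc n f)" by (auto simp: hom_def hc_def)
    show "symm d (hc n f)"
    proof (unfold symm_def, intro allI impI ps_eqI)
      fix i j m assume "i < d" "j < d"
      then have "rn i j f = f" using fS by (simp add: symm_def)
      then have "cf f (mperm i j m) = cf f m" by (metis cf_cop)
      then show "cf (rn i j (hc n f)) m = cf (hc n f) m"
        by (simp add: cf_cop hc_def mdeg_mperm[simplified])
    qed
  qed
  then obtain S where S: "\<And>n. cf (S n) \<in> PS {1..d} \<and> whom n (S n) \<and> sub (S n) (ssub d) = hc n f"
    by metis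
  define s where "s = PSA (\<lambda>k. cf (S (wsum id k)) k)"
  have sP: "cf s \<in> PS {1..d}"
    using S by (auto simp: s_def PS_def)
  have "sub s (ssub d) = f"
  proof (rule ps_eqI)
    fix m
    let ?K = "KS {i. ssub d i \<noteq> (0::'a ps)} (mdeg m)"
    have t: "cf s k * cf (hpow (ssub d) k) m = cf (S (mdeg m)) k * cf (hpow (ssub d) k) m" for k
    proof (cases "wsum id k = mdeg m")
      case True then show ?thesis by (simp add: s_def)
    next
      case False
      then have "cf (hpow (ssub d) k) m = (0::'a)" using hom_hpow_ssub[of k d] by (auto simp: hom_def)
      then show ?thesis by simp
    qed
    have "cf (sub s (ssub d)) m = (\<Sum>k\<in>?K. cf s k * cf (hpow (ssub d) k) m)"
      by (rule sub_fin'[OF nice_ssub order_refl])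
    also have "\<dots> = (\<Sum>k\<in>?K. cf (S (mdeg m)) k * cf (hpow (ssub d) k) m)"
      by (simp add: t)
    also have "\<dots> = cf (sub (S (mdeg m)) (ssub d)) m"
      by (rule sub_fin'[OF nice_ssub order_refl, symmetric])
    also have "\<dots> = cf f m" using S by (simp add: hc_def)
    finally show "cf (sub s (ssub d)) m = cf f m" .
  qed
  then show ?thesis using sP by blast
qed


definition wt :: "nat \<Rightarrow> nat" where "wt i = (if i = 1 then 1 else 2)"

abbreviation ww :: "mono \<Rightarrow> nat" where "ww \<equiv> wsum wt"

definition ordw :: "'a::comm_ring_1 ps \<Rightarrow> nat \<Rightarrow> bool" where
  "ordw a n \<longleftrightarrow> (\<forall>m. ww m < n \<longrightarrow> cf a m = 0)"

lemma ordw_mult: "ordw a A \<Longrightarrow> ordw b B \<Longrightarrow> ordw (a * b) (A + B)"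
  unfolding ordw_def cf_mult
proof (intro allI impI sum.neutral ballI, clarify)
  fix m p q
  assume a: "\<forall>m. ww m < A \<longrightarrow> cf a m = 0" and b: "\<forall>m. ww m < B \<longrightarrow> cf b m = 0"
    and "ww m < A + B" and "(p, q) \<in> Pr m"
  then have "ww p < A \<or> ww q < B" by (auto simp: Pr_def wsum_add)
  then show "cf a p * cf b q = 0" using a b by auto
qed

lemma ordw_mono: "ordw a A \<Longrightarrow> B \<le> A \<Longrightarrow> ordw a B"
  by (auto simp: ordw_def)

lemma mdeg_le_ww: "mdeg m \<le> ww m"
  unfolding wsum_def by (intro sum_mono) (simp add: wt_def)

lemma ww_0: "ww m = 0 \<Longrightarrow> m = 0"
  using mdeg_le_ww[of m] by simp

abbreviation e1 :: mono where "e1 \<equiv> Poly_Mapping.single (Suc 0) (Suc 0)"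

lemma ww_1: assumes "ww m = 1" shows "m = e1"
proof -
  have "mdeg m \<le> 1" using mdeg_le_ww[of m] assms by simp
  moreover have "m \<noteq> 0" using assms by auto
  ultimately have "mdeg m = 1" by (cases "mdeg m") auto
  then obtain i where i: "m = Poly_Mapping.single i 1" using mdeg_1_iff by blast
  then have "ww m = wt i * 1" by (simp only: wsum_single)
  then have "wt i = 1" using assms by (metis mult.right_neutral)
  then have "i = 1" by (cases "i = 1") (auto simp: wt_def)
  then show ?thesis using i by simp
qed


lemma ww_e1 [simp]: "ww e1 = 1" by (simp add: wt_def)

lemma ww_add_e1 [simp]: "ww (m + e1) = Suc (ww m)"
  by (simp add: wsum_add wt_def)

lemma e1_Dv: "e1 \<in> Dv m \<longleftrightarrow> 1 \<in> ks m"
proof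
  assume "e1 \<in> Dv m"
  then obtain q where "m = e1 + q" by (auto simp: Dv_def)
  then show "1 \<in> ks m" by (simp add: ks_add)
next
  assume a: "1 \<in> ks m"
  have "m = e1 + (m - e1)"
    using a by (intro poly_mapping_eqI) (auto simp: lookup_add lookup_minus lookup_single when_def in_keys_iff)
  then show "e1 \<in> Dv m" by (auto simp: Dv_def)
qed

section \<open>Division by a series s = X1 + higher order\<close>

locale divs =
  fixes s :: "'a::comm_ring_1 ps" and d :: nat
  assumes sP: "cf s \<in> PS {1..d}" and d1: "1 \<le> d"
    and s0: "cf s 0 = 0" and s1: "cf s e1 = 1"
begin

definition t :: "'a ps" where "t = s - X 1"

lemma ordw_t: "ordw t 2"
proof (unfold ordw_def, intro allI impI)
  fix m assume "ww m < 2"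
  then consider "ww m = 0" | "ww m = 1" by linarith
  then show "cf t m = 0"
  proof cases
    case 1 then have "m = 0" by (rule ww_0)
    then show ?thesis by (simp add: t_def s0)
  next
    case 2 then have "m = e1" by (rule ww_1)
    then show ?thesis using s1 by (simp add: t_def X_def cf_mon)
  qed
qed

lemma tP: "cf t \<in> PS {1..d}"
  unfolding t_def by (intro PS_cf_diff sP PS_cf_X) (use d1 in auto)

definition P0 :: "'a ps \<Rightarrow> 'a ps" where "P0 x = PSA (\<lambda>m. if 1 \<notin> ks m then cf x m else 0)"
definition P1 :: "'a ps \<Rightarrow> 'a ps" where "P1 x = PSA (\<lambda>m. cf x (m + e1))"
definition T :: "'a ps \<Rightarrow> 'a ps" where "T x = - (t * P1 x)"

lemma split: "x = P0 x + X 1 * P1 x"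
proof (rule ps_eqI)
  fix m
  show "cf x m = cf (P0 x + X 1 * P1 x) m"
  proof (cases "1 \<in> ks m")
    case True
    then obtain q where q: "m = e1 + q" using e1_Dv by (auto simp: Dv_def)
    then show ?thesis using True
      by (simp add: P0_def P1_def X_def cf_mon_mult e1_Dv add.commute)
  next
    case False
    then show ?thesis by (simp add: P0_def P1_def X_def cf_mon_mult e1_Dv)
  qed
qed

lemma split2: "x = P0 x + s * P1 x + T x"
proof -
  have "x = P0 x + X 1 * P1 x" by (rule split)
  also have "X 1 = s - t" by (simp add: t_def)
  finally show ?thesis by (simp add: T_def algebra_simps)
qed

lemma ordw_P1: "ordw x A \<Longrightarrow> ordw (P1 x) (A - 1)"
  by (auto simp: ordw_def P1_def)

lemma ordw_T: "ordw x A \<Longrightarrow> ordw (T x) (A + 1)"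
proof -
  assume "ordw x A"
  then have "ordw (t * P1 x) (2 + (A - 1))" by (intro ordw_mult ordw_t ordw_P1)
  then have "ordw (t * P1 x) (A + 1)" by (rule ordw_mono) simp
  then show ?thesis by (simp add: ordw_def T_def)
qed

lemma PS_P1: "cf x \<in> PS {1..d} \<Longrightarrow> cf (P1 x) \<in> PS {1..d}"
  unfolding PS_def P1_def mem_Collect_eq cf_PSA by (metis Un_subset_iff ks_add)

lemma PS_T: "cf x \<in> PS {1..d} \<Longrightarrow> cf (T x) \<in> PS {1..d}"
proof -
  assume "cf x \<in> PS {1..d}"
  then have "cf (t * P1 x) \<in> PS {1..d}" by (rule PS_cf_mult[OF tP PS_P1])
  then show ?thesis by (simp add: T_def PS_def)
qed

definition fn :: "'a ps \<Rightarrow> nat \<Rightarrow> 'a ps" where "fn f n = (T ^^ n) f"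

lemma fn_Suc: "fn f (Suc n) = T (fn f n)" by (simp add: fn_def)

lemma ordw_fn: "ordw (fn f n) n"
proof (induction n)
  case 0 then show ?case by (simp add: ordw_def)
next
  case (Suc n) then show ?case using ordw_T[of "fn f n" n] by (simp add: fn_Suc)
qed

lemma PS_fn: "cf f \<in> PS {1..d} \<Longrightarrow> cf (fn f n) \<in> PS {1..d}"
proof (induction n)
  case 0 then show ?case by (simp add: fn_def)
next
  case (Suc n) then show ?case unfolding fn_Suc by (intro PS_T) simp
qed

definition GG :: "'a ps \<Rightarrow> nat \<Rightarrow> 'a ps" where "GG f N = (\<Sum>n<N. P0 (fn f n))"
definition HH :: "'a ps \<Rightarrow> nat \<Rightarrow> 'a ps" where "HH f N = (\<Sum>n<N. P1 (fn f n))"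

lemma ident: "f = GG f N + s * HH f N + fn f N"
proof (induction N)
  case 0 then show ?case by (simp add: GG_def HH_def fn_def)
next
  case (Suc N)
  have "fn f N = P0 (fn f N) + s * P1 (fn f N) + fn f (Suc N)"
    using split2[of "fn f N"] by (simp add: fn_Suc)
  then have z1: "fn f N - (P0 (fn f N) + s * P1 (fn f N) + fn f (Suc N)) = 0" by simp
  have z2: "f - (GG f N + s * HH f N + fn f N) = 0" using Suc by simp
  have "f - (GG f (Suc N) + s * HH f (Suc N) + fn f (Suc N))
     = (f - (GG f N + s * HH f N + fn f N)) + (fn f N - (P0 (fn f N) + s * P1 (fn f N) + fn f (Suc N)))"
    by (simp add: GG_def HH_def algebra_simps)
  then show ?case using z1 z2 by simp
qed

lemma GG_stable: "ww m + 2 \<le> N \<Longrightarrow> cf (GG f N) m = cf (GG f (ww m + 2)) m"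
proof (induction N rule: dec_induct)
  case (step N)
  have "cf (fn f N) m = 0" using ordw_fn[of f N] step(1) by (simp add: ordw_def)
  then show ?case using step by (simp add: GG_def P0_def)
qed simp

lemma HH_stable: "ww m + 2 \<le> N \<Longrightarrow> cf (HH f N) m = cf (HH f (ww m + 2)) m"
proof (induction N rule: dec_induct)
  case (step N)
  have "cf (fn f N) (m + e1) = 0"
    using ordw_fn[of f N, unfolded ordw_def, rule_format, of "m + e1"] step(1) by simp
  then show ?case using step by (simp add: HH_def P1_def)
qed simp

lemma exist:
  assumes fP: "cf f \<in> PS {1..d}"
  shows "\<exists>g h. cf g \<in> PS {2..d} \<and> cf h \<in> PS {1..d} \<and> f = g + s * h"
proof -
  define g where "g = PSA (\<lambda>m. cf (GG f (ww m + 2)) m)"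
  define h where "h = PSA (\<lambda>m. cf (HH f (ww m + 2)) m)"
  have "f = g + s * h"
  proof (rule ps_eqI)
    fix m
    let ?N = "ww m + 2"
    have "cf f m = cf (GG f ?N) m + cf (s * HH f ?N) m + cf (fn f ?N) m"
      by (subst ident[of f ?N]) simp
    also have "cf (fn f ?N) m = 0" using ordw_fn[of f ?N] by (simp add: ordw_def)
    also have "cf (s * HH f ?N) m = cf (s * h) m"
      unfolding cf_mult
    proof (rule sum.cong[OF refl], clarify)
      fix p q assume "(p, q) \<in> Pr m"
      then have "ww q + 2 \<le> ?N" by (auto simp: Pr_def wsum_add)
      then show "cf s p * cf (HH f ?N) q = cf s p * cf h q"
        by (simp only: h_def cf_PSA HH_stable[of q ?N f])
    qed
    finally show "cf f m = cf (g + s * h) m" by (simp add: g_def)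
  qed
  moreover have "cf g \<in> PS {2..d}"
  proof (unfold PS_def mem_Collect_eq, intro allI impI)
    fix m assume nz: "cf g m \<noteq> 0"
    have "cf g m = (\<Sum>n<ww m + 2. cf (P0 (fn f n)) m)" by (simp only: g_def cf_PSA GG_def cf_sum)
    then obtain n where "cf (P0 (fn f n)) m \<noteq> 0"
      using nz by (metis sum.not_neutral_contains_not_neutral)
    then have "1 \<notin> ks m" "cf (fn f n) m \<noteq> 0" by (auto simp: P0_def split: if_splits)
    moreover have "ks m \<subseteq> {1..d}" using PS_fn[OF fP, of n] calculation(2) by (simp add: PS_def)
    ultimately show "ks m \<subseteq> {2..d}"
      by (auto simp: subset_iff) (metis One_nat_def Suc_1 Suc_le_eq atLeastAtMost_iff le_neq_implies_less)
  qed
  moreover have "cf h \<in> PS {1..d}"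
  proof (unfold PS_def mem_Collect_eq, intro allI impI)
    fix m assume nz: "cf h m \<noteq> 0"
    have "cf h m = (\<Sum>n<ww m + 2. cf (P1 (fn f n)) m)" by (simp only: h_def cf_PSA HH_def cf_sum)
    then obtain n where "cf (P1 (fn f n)) m \<noteq> 0"
      using nz by (metis sum.not_neutral_contains_not_neutral)
    then show "ks m \<subseteq> {1..d}" using PS_P1[OF PS_fn[OF fP, of n]] by (auto simp: PS_def)
  qed
  ultimately show ?thesis by blast
qed

lemma uniq0:
  assumes gP: "cf g \<in> PS {2..d}" and eq: "g = s * h"
  shows "h = 0"
proof (rule ccontr)
  assume "h \<noteq> 0"
  then obtain m0 where "cf h m0 \<noteq> 0" by (metis cf_zero ps_eqI)
  define w0 where "w0 = (LEAST v. \<exists>m. cf h m \<noteq> 0 \<and> ww m = v)"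
  have "\<exists>m. cf h m \<noteq> 0 \<and> ww m = w0"
    unfolding w0_def by (rule LeastI[of _ "ww m0"]) (use \<open>cf h m0 \<noteq> 0\<close> in auto)
  then obtain m where m: "cf h m \<noteq> 0" "ww m = w0" by blast
  have oh: "ordw h w0"
  proof (unfold ordw_def, intro allI impI)
    fix m' assume "ww m' < w0"
    then show "cf h m' = 0" unfolding w0_def using not_less_Least by blast
  qed
  have "cf g (m + e1) = 0"
    using gP by (auto simp: PS_def ks_add)
  moreover have "s * h = X 1 * h + t * h" by (simp add: t_def algebra_simps)
  then have "cf (s * h) (m + e1) = cf (X 1 * h) (m + e1) + cf (t * h) (m + e1)"
    by simp
  moreover have "cf (X 1 * h) (m + e1) = cf h m"
    by (simp add: X_def cf_mon_mult Dv_def add.commute)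
  moreover have "cf (t * h) (m + e1) = 0"
    using ordw_mult[OF ordw_t oh, unfolded ordw_def, rule_format, of "m + e1"] m(2) by simp
  ultimately show False using eq m(1) by simp
qed

lemma quot:
  assumes fP: "f \<in> PS {1..d}"
  shows "\<exists>!g. g \<in> PS {2..d} \<and> mps_diff f g \<in> mps_ideal {1..d} (cf s)"
proof -
  have ideal: "mps_diff f g \<in> mps_ideal {1..d} (cf s) \<longleftrightarrow>
      (\<exists>h. cf h \<in> PS {1..d} \<and> PSA f = PSA g + s * h)" for g
  proof -
    have "mps_diff f g = cf (PSA f - PSA g)" by (rule ext) (simp add: mps_diff_def)
    then have "mps_diff f g \<in> mps_ideal {1..d} (cf s) \<longleftrightarrow>
      (\<exists>h. h \<in> PS {1..d} \<and> cf (PSA f - PSA g) = cf (s * PSA h))"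
      by (auto simp: mps_ideal_def cf_mult_eq)
    also have "\<dots> \<longleftrightarrow> (\<exists>h. cf h \<in> PS {1..d} \<and> PSA f = PSA g + s * h)"
    proof
      assume "\<exists>h. h \<in> PS {1..d} \<and> cf (PSA f - PSA g) = cf (s * PSA h)"
      then obtain h where "h \<in> PS {1..d}" "PSA f - PSA g = s * PSA h" by (auto simp: cf_inject)
      then show "\<exists>h. cf h \<in> PS {1..d} \<and> PSA f = PSA g + s * h"
        by (intro exI[of _ "PSA h"]) (auto simp: algebra_simps)
    next
      assume "\<exists>h. cf h \<in> PS {1..d} \<and> PSA f = PSA g + s * h"
      then obtain h where "cf h \<in> PS {1..d}" "PSA f = PSA g + s * h" by blast
      then show "\<exists>h. h \<in> PS {1..d} \<and> cf (PSA f - PSA g) = cf (s * PSA h)"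
        by (intro exI[of _ "cf h"]) (simp add: cf_inverse)
    qed
    finally show ?thesis .
  qed
  obtain g h where g: "cf g \<in> PS {2..d}" and h: "cf h \<in> PS {1..d}" and e: "PSA f = g + s * h"
    using exist[of "PSA f"] fP by auto
  show ?thesis
  proof (rule ex1I[of _ "cf g"])
    show "cf g \<in> PS {2..d} \<and> mps_diff f (cf g) \<in> mps_ideal {1..d} (cf s)"
      unfolding ideal using g h e by (auto simp: cf_inverse)
  next
    fix g' assume a: "g' \<in> PS {2..d} \<and> mps_diff f g' \<in> mps_ideal {1..d} (cf s)"
    then have g': "g' \<in> PS {2..d}" by blast
    obtain h' where e': "PSA f = PSA g' + s * h'"
      using a unfolding ideal by blast
    have "PSA g' - g = s * (h - h')" using e e' by (simp add: algebra_simps)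
    moreover have "cf (PSA g' - g) \<in> PS {2..d}" using g g' by (intro PS_cf_diff) simp_all
    ultimately have "h - h' = 0" by (intro uniq0) auto
    then have "PSA g' = g" using e e' by simp
    then show "g' = cf g" by auto
  qed
qed

end


abbreviation e0 :: mono where "e0 \<equiv> Poly_Mapping.single 0 (Suc 0)"

lemma wsum_id_ge_mdeg: assumes "0 \<notin> ks k" shows "mdeg k \<le> wsum id k"
  unfolding wsum_def
proof (rule sum_mono)
  fix i assume "i \<in> ks k"
  then have "i \<noteq> 0" using assms by metis
  then show "1 * lk k i \<le> id i * lk k i" by simp
qed

lemma sub_ssub_e0:
  assumes d1: "1 \<le> d" and sP: "cf s \<in> PS {1..d}"
  shows "cf (sub s (ssub d)) e0 = cf s e1"
proof -
  let ?K = "KS {i. ssub d i \<noteq> (0::'a ps)} (mdeg e0)"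
  have me0: "mdeg e0 = 1" by simp
  have sq1: "sq d 1 e0" using d1 by (simp add: sq_def lookup_single when_def)
  have es1: "cf (es d 1 :: 'a ps) e0 = 1" using sq1 by (simp add: cf_es)
  have t1: "cf s e1 * cf (hpow (ssub d) e1) e0 = cf s e1"
    using d1 es1 by (simp add: ssub_def)
  have e1K: "e1 \<in> ?K"
  proof -
    have "ssub d 1 \<noteq> (0::'a ps)" using es1 d1 by (auto simp: ssub_def)
    then show ?thesis by (simp add: KS_def)
  qed
  have other: "cf s k * cf (hpow (ssub d) k) e0 = 0" if "k \<noteq> e1" for k
  proof (rule ccontr)
    assume "cf s k * cf (hpow (ssub d) k) e0 \<noteq> 0"
    then have a: "cf s k \<noteq> 0" and b: "cf (hpow (ssub d) k) e0 \<noteq> (0::'a)" by auto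
    have "ks k \<subseteq> {1..d}" using a sP by (simp add: PS_def)
    then have k0: "0 \<notin> ks k" by auto
    have w: "wsum id k = 1" using b hom_hpow_ssub[of k d] by (auto simp: hom_def)
    then have "k \<noteq> 0" by auto
    moreover have "mdeg k \<le> 1" using wsum_id_ge_mdeg[OF k0] w by simp
    ultimately have "mdeg k = 1" by (cases "mdeg k") auto
    then obtain i where i: "k = Poly_Mapping.single i 1" using mdeg_1_iff by blast
    then have "wsum id k = id i * 1" by (simp only: wsum_single)
    then have "i = 1" using w by simp
    then show False using i that by simp
  qed
  have "cf (sub s (ssub d)) e0 = (\<Sum>k\<in>?K. cf s k * cf (hpow (ssub d) k) e0)"
    by (rule sub_fin'[OF nice_ssub order_refl])
  also have "\<dots> = cf s e1 * cf (hpow (ssub d) e1) e0 + (\<Sum>k\<in>?K - {e1}. cf s k * cf (hpow (ssub d) k) e0)"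
    by (rule sum.remove[OF finite_KS[OF nice_finite[OF nice_ssub]] e1K])
  also have "(\<Sum>k\<in>?K - {e1}. cf s k * cf (hpow (ssub d) k) e0) = 0"
    by (rule sum.neutral) (auto intro: other)
  finally show ?thesis using t1 by simp
qed

theorem proposition13p2:
  fixes F :: "'a::comm_ring_1 mps" and d :: nat
  assumes "formal_group_law F" and "1 \<le> d"
  shows "(\<exists>s \<in> PS {1..d}. mps_subst s (sym_subst d) = iter_sum F d) \<and>
         (\<forall>s \<in> PS {1..d}. mps_subst s (sym_subst d) = iter_sum F d \<longrightarrow>
            (\<forall>f \<in> PS {1..d}. \<exists>!g. g \<in> PS {2..d} \<and> mps_diff f g \<in> mps_ideal {1..d} s))"
proof -
  interpret fgl F by unfold_locales (rule assms(1))
  have d1: "1 \<le> d" by (rule assms(2))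
  have key: "mps_subst s (sym_subst d) = cf (sub (PSA s) (ssub d))" for s :: "'a mps"
    by (simp add: sub_def cf_ssub)
  have c1: "\<exists>s \<in> PS {1..d}. mps_subst s (sym_subst d) = iter_sum F d"
  proof -
    have "symm d (IS d)" by (simp add: symm_def IS_sym)
    then obtain s0 where s0: "cf s0 \<in> PS {1..d}" "sub s0 (ssub d) = IS d"
      using SYM[OF IS_PS] by blast
    then have "mps_subst (cf s0) (sym_subst d) = iter_sum F d"
      by (simp add: key cf_inverse cf_IS)
    then show ?thesis using s0(1) by blast
  qed
  have c2: "\<forall>f \<in> PS {1..d}. \<exists>!g. g \<in> PS {2..d} \<and> mps_diff f g \<in> mps_ideal {1..d} s"
    if sP: "s \<in> PS {1..d}" and sE: "mps_subst s (sym_subst d) = iter_sum F d" for s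
  proof -
    let ?S = "PSA s"
    have SE: "sub ?S (ssub d) = IS d"
      using sE by (simp add: key cf_IS[symmetric] cf_inject)
    have SP: "cf ?S \<in> PS {1..d}" using sP by simp
    have S0: "cf ?S 0 = 0"
      using sub_cf0[OF nice_ssub, of ?S d] SE IS_cf0[of d] by simp
    have "cf (IS d) e0 = (\<Sum>i<d. cf (X i) e0)"
      by (rule IS_lin) simp
    also have "\<dots> = (\<Sum>i<d. if i = 0 then 1 else 0)"
    proof (rule sum.cong[OF refl])
      fix i
      have "(e0 = Poly_Mapping.single i 1) \<longleftrightarrow> i = 0"
        by (metis lookup_single_eq lookup_single_not_eq one_neq_zero One_nat_def)
      then show "cf (X i) e0 = (if i = 0 then 1 else 0)" by (simp add: X_def cf_mon)
    qed
    also have "\<dots> = 1" using d1 by (simp add: sum.delta)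
    finally have "cf (IS d) e0 = 1" .
    then have S1: "cf ?S e1 = 1"
      using sub_ssub_e0[OF d1 SP] SE by simp
    interpret divs ?S d by unfold_locales (use SP d1 S0 S1 in auto)
    show ?thesis using quot by simp
  qed
  show ?thesis using c1 c2 by blast
qed


end
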